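(* For all $(n,k),(p,q)\in\mathcal{I}$, $$S^{n,k}_{p,q}=\int_0^1\Big(\phi^\alpha_{n,k}(t)+\frac{\alpha(t)-\beta(t)}{\sqrt{\Gamma(t)}}\psi^\alpha_{n,k}(t)\Big)\Big(\phi^\alpha_{p,q}(t)+\frac{\alpha(t)-\beta(t)}{\sqrt{\Gamma(t)}}\psi^\alpha_{p,q}(t)\Big)\,dt.$$
   Context: One-dimensional setting. Let $\alpha,\beta:[0,1]\to\mathbb{R}$ and $\sqrt{\Gamma}:[0,1]\to(0,\infty)$ be H\"older continuous, $\Gamma=(\sqrt{\Gamma})^2$. For $\gamma\in\{\alpha,\beta\}$ (corresponding to the process $dX_t=\gamma(t)X_tdt+\sqrt{\Gamma(t)}dW_t$, $X_0=0$) let $g_\gamma(t)=\exp(\int_0^t\gamma)$, $f_\gamma(t)=\sqrt{\Gamma(t)}\exp(-\int_0^t\gamma)$, $h_\gamma(t)=\int_0^tf_\gamma(s)^2ds$, $h_\gamma(s,t)=h_\gamma(t)-h_\gamma(s)$. $\mathcal{I}=\{(0,0)\}\cup\{(n,k):n\ge1,\ 0\le k<2^{n-1}\}$. Partition: fix $\rho\in(0,1)$ and reals $l_{n,k}<m_{n,k}<r_{n,k}$ ($n\ge1$) with $l_{1,0}=0$, $r_{1,0}=1$, $l_{n+1,2k}=l_{n,k}$, $r_{n+1,2k}=l_{n+1,2k+1}=m_{n,k}$, $r_{n+1,2k+1}=r_{n,k}$, $\max(r_{n,k}-m_{n,k},m_{n,k}-l_{n,k})<\rho(r_{n,k}-l_{n,k})$.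 For $n\ge1$, writing $l,m,r$ for $l_{n,k},m_{n,k},r_{n,k}$: $\sigma^\gamma_{n,k}=g_\gamma(m)\sqrt{h_\gamma(l,m)h_\gamma(m,r)/h_\gamma(l,r)}$, $L^\gamma_{n,k}=\sigma^\gamma_{n,k}/(g_\gamma(m)h_\gamma(l,m))$, $R^\gamma_{n,k}=\sigma^\gamma_{n,k}/(g_\gamma(m)h_\gamma(m,r))$, $M^\gamma_{n,k}=g_\gamma(m)/\sigma^\gamma_{n,k}$, and $\psi^\gamma_{n,k}(t)=g_\gamma(t)h_\gamma(l,t)L^\gamma_{n,k}$ on $[l,m]$, $g_\gamma(t)h_\gamma(t,r)R^\gamma_{n,k}$ on $[m,r]$, $0$ elsewhere. Also $\sigma^\gamma_{0,0}=g_\gamma(1)\sqrt{h_\gamma(0,1)}$, $L^\gamma_{0,0}=\sigma^\gamma_{0,0}/(g_\gamma(1)h_\gamma(0,1))$, $\psi^\gamma_{0,0}(t)=g_\gamma(t)h_\gamma(0,t)L^\gamma_{0,0}$. Let $\phi^\gamma_{n,k}(t)=\frac{1}{f_\gamma(t)}\frac{d}{dt}\big(\psi^\gamma_{n,k}(t)/g_\gamma(t)\big)$ (defined except at finitely many points). For continuous $x$: $\Delta^\gamma_{n,k}(x)=M^\gamma_{n,k}x(m)/g_\gamma(m)-L^\gamma_{n,k}x(l)/g_\gamma(l)-R^\gamma_{n,k}x(r)/g_\gamma(r)$ ($n\ge1$), $\Delta^\gamma_{0,0}(x)=L^\gamma_{0,0}x(1)/g_\gamma(1)$. Let $G^{i,j}_{n,k}=\Delta^\beta_{i,j}(\psi^\alpha_{n,k})$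 (the matrix of the coefficient lift operator mapping coefficients of the $\alpha$-process to those of the $\beta$-process) and $S^{n,k}_{p,q}=\sum_{(i,j)\in\mathcal{I}}G^{i,j}_{n,k}G^{i,j}_{p,q}$ (the matrix of $G^TG$). *)

theory Defs
  imports "HOL-Analysis.Analysis"
begin

definition holder01 :: "(real \<Rightarrow> real) \<Rightarrow> bool" where
  "holder01 f \<longleftrightarrow> (\<exists>C a. 0 < a \<and> a \<le> 1 \<and>
      (\<forall>x\<in>{0..1}. \<forall>y\<in>{0..1}. \<bar>f x - f y\<bar> \<le> C * \<bar>x - y\<bar> powr a))"

definition nested_partition ::
  "real \<Rightarrow> (nat \<Rightarrow> nat \<Rightarrow> real) \<Rightarrow> (nat \<Rightarrow> nat \<Rightarrow> real) \<Rightarrow> (nat \<Rightarrow> nat \<Rightarrow> real) \<Rightarrow> bool" where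
  "nested_partition \<rho> l m r \<longleftrightarrow> 0 < \<rho> \<and> \<rho> < 1 \<and> l 1 0 = 0 \<and> r 1 0 = 1 \<and>
     (\<forall>n k. 1 \<le> n \<longrightarrow> k < 2^(n-1) \<longrightarrow>
        l n k < m n k \<and> m n k < r n k \<and>
        max (r n k - m n k) (m n k - l n k) < \<rho> * (r n k - l n k) \<and>
        l (n+1) (2*k) = l n k \<and> r (n+1) (2*k) = m n k \<and>
        l (n+1) (2*k+1) = m n k \<and> r (n+1) (2*k+1) = r n k)"

definition idx :: "(nat \<times> nat) set" where
  "idx = {(0,0)} \<union> {(n,k). 1 \<le> n \<and> k < 2^(n-1)}"

text \<open>sG is sqrt Gamma, c is the drift gamma.\<close>
definition gf :: "(real \<Rightarrow> real) \<Rightarrow> real \<Rightarrow> real" where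
  "gf c t = exp (integral {0..t} c)"

definition ff :: "(real \<Rightarrow> real) \<Rightarrow> (real \<Rightarrow> real) \<Rightarrow> real \<Rightarrow> real" where
  "ff sG c t = sG t * exp (- integral {0..t} c)"

definition hf :: "(real \<Rightarrow> real) \<Rightarrow> (real \<Rightarrow> real) \<Rightarrow> real \<Rightarrow> real" where
  "hf sG c t = integral {0..t} (\<lambda>s. (ff sG c s)^2)"

definition hh :: "(real \<Rightarrow> real) \<Rightarrow> (real \<Rightarrow> real) \<Rightarrow> real \<Rightarrow> real \<Rightarrow> real" where
  "hh sG c s t = hf sG c t - hf sG c s"

type_synonym part = "nat \<Rightarrow> nat \<Rightarrow> real"

definition sig :: "(real \<Rightarrow> real) \<Rightarrow> (real \<Rightarrow> real) \<Rightarrow> part \<Rightarrow> part \<Rightarrow> part \<Rightarrow> nat \<times> nat \<Rightarrow> real" where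
  "sig sG c l m r nk = (case nk of (n,k) \<Rightarrow>
     if n = 0 then gf c 1 * sqrt (hh sG c 0 1)
     else gf c (m n k) * sqrt (hh sG c (l n k) (m n k) * hh sG c (m n k) (r n k)
                               / hh sG c (l n k) (r n k)))"

definition Lc :: "(real \<Rightarrow> real) \<Rightarrow> (real \<Rightarrow> real) \<Rightarrow> part \<Rightarrow> part \<Rightarrow> part \<Rightarrow> nat \<times> nat \<Rightarrow> real" where
  "Lc sG c l m r nk = (case nk of (n,k) \<Rightarrow>
     if n = 0 then sig sG c l m r nk / (gf c 1 * hh sG c 0 1)
     else sig sG c l m r nk / (gf c (m n k) * hh sG c (l n k) (m n k)))"

definition Rc :: "(real \<Rightarrow> real) \<Rightarrow> (real \<Rightarrow> real) \<Rightarrow> part \<Rightarrow> part \<Rightarrow> part \<Rightarrow> nat \<times> nat \<Rightarrow> real" where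
  "Rc sG c l m r nk = (case nk of (n,k) \<Rightarrow>
     sig sG c l m r nk / (gf c (m n k) * hh sG c (m n k) (r n k)))"

definition Mc :: "(real \<Rightarrow> real) \<Rightarrow> (real \<Rightarrow> real) \<Rightarrow> part \<Rightarrow> part \<Rightarrow> part \<Rightarrow> nat \<times> nat \<Rightarrow> real" where
  "Mc sG c l m r nk = (case nk of (n,k) \<Rightarrow> gf c (m n k) / sig sG c l m r nk)"

definition psi :: "(real \<Rightarrow> real) \<Rightarrow> (real \<Rightarrow> real) \<Rightarrow> part \<Rightarrow> part \<Rightarrow> part \<Rightarrow> nat \<times> nat \<Rightarrow> real \<Rightarrow> real" where
  "psi sG c l m r nk t = (case nk of (n,k) \<Rightarrow>
     if n = 0 then gf c t * hh sG c 0 t * Lc sG c l m r nk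
     else if l n k \<le> t \<and> t \<le> m n k then gf c t * hh sG c (l n k) t * Lc sG c l m r nk
     else if m n k \<le> t \<and> t \<le> r n k then gf c t * hh sG c t (r n k) * Rc sG c l m r nk
     else 0)"

text \<open>phi: the derivative exists except at finitely many points (where the
  value of deriv is irrelevant for the integral).\<close>
definition phi :: "(real \<Rightarrow> real) \<Rightarrow> (real \<Rightarrow> real) \<Rightarrow> part \<Rightarrow> part \<Rightarrow> part \<Rightarrow> nat \<times> nat \<Rightarrow> real \<Rightarrow> real" where
  "phi sG c l m r nk t = (1 / ff sG c t) * deriv (\<lambda>s. psi sG c l m r nk s / gf c s) t"

definition Delta :: "(real \<Rightarrow> real) \<Rightarrow> (real \<Rightarrow> real) \<Rightarrow> part \<Rightarrow> part \<Rightarrow> part \<Rightarrow> nat \<times> nat \<Rightarrow> (real \<Rightarrow> real) \<Rightarrow> real" where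
  "Delta sG c l m r nk x = (case nk of (n,k) \<Rightarrow>
     if n = 0 then Lc sG c l m r nk * x 1 / gf c 1
     else Mc sG c l m r nk * x (m n k) / gf c (m n k)
        - Lc sG c l m r nk * x (l n k) / gf c (l n k)
        - Rc sG c l m r nk * x (r n k) / gf c (r n k))"

definition Gm :: "(real \<Rightarrow> real) \<Rightarrow> (real \<Rightarrow> real) \<Rightarrow> (real \<Rightarrow> real) \<Rightarrow> part \<Rightarrow> part \<Rightarrow> part
    \<Rightarrow> nat \<times> nat \<Rightarrow> nat \<times> nat \<Rightarrow> real" where
  "Gm sG a b l m r ij nk = Delta sG b l m r ij (psi sG a l m r nk)"

end

theory Submission
  imports Defs "HOL-Analysis.Analysis"
begin

lemma sum_even_odd_split:
  fixes g :: "nat \<Rightarrow> 'a::comm_monoid_add"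
  shows "(\<Sum>k<2*n. g k) = (\<Sum>j<n. g (2*j) + g (2*j+1))"
  by (induction n) (auto simp: add.assoc)

locale npart =
  fixes \<rho> :: real and l m r :: "nat \<Rightarrow> nat \<Rightarrow> real"
  assumes part: "nested_partition \<rho> l m r"
begin

lemma rho: "0 < \<rho>" "\<rho> < 1" using part unfolding nested_partition_def by auto
lemma base01: "l 1 0 = 0" "r 1 0 = 1" "l (Suc 0) 0 = 0" "r (Suc 0) 0 = 1" using part unfolding nested_partition_def by auto

lemma step:
  assumes "k < 2^N"
  shows "l (Suc N) k < m (Suc N) k" "m (Suc N) k < r (Suc N) k"
    "max (r (Suc N) k - m (Suc N) k) (m (Suc N) k - l (Suc N) k) < \<rho> * (r (Suc N) k - l (Suc N) k)"
    "l (Suc (Suc N)) (2*k) = l (Suc N) k" "r (Suc (Suc N)) (2*k) = m (Suc N) k"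
    "l (Suc (Suc N)) (2*k+1) = m (Suc N) k" "r (Suc (Suc N)) (2*k+1) = r (Suc N) k"
  using part assms unfolding nested_partition_def
  by (auto dest!: spec[of _ "Suc N"] simp del: max_less_iff_conj)

lemma level_induct[consumes 1, case_names B S]:
  assumes "(k::nat) < 2^N" and b: "P 0 0"
    and s: "\<And>N j. j < (2::nat)^N \<Longrightarrow> P N j \<Longrightarrow> P (Suc N) (2*j) \<and> P (Suc N) (2*j+1)"
  shows "P N k"
  using assms(1)
proof (induction N arbitrary: k)
  case 0 then show ?case using b by simp
next
  case (Suc N)
  have k: "k = 2*(k div 2) + k mod 2" by simp
  have "k div 2 < 2^N" using Suc.prems by auto
  then have "P N (k div 2)" using Suc.IH by blast
  then have "P (Suc N) (2*(k div 2)) \<and> P (Suc N) (2*(k div 2)+1)" using s \<open>k div 2 < 2^N\<close> by blast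
  moreover have "k mod 2 = 0 \<or> k mod 2 = 1" by auto
  ultimately show ?case using k by (metis add.right_neutral)
qed

lemma lr_bounds: "k < 2^N \<Longrightarrow> 0 \<le> l (Suc N) k \<and> l (Suc N) k < r (Suc N) k \<and> r (Suc N) k \<le> 1"
proof (induction N k rule: level_induct)
  case B then show ?case using base01 by simp
next
  case (S N j)
  then show ?case using step[OF S(1)] by auto
qed

lemma lr_width: "k < 2^N \<Longrightarrow> r (Suc N) k - l (Suc N) k \<le> \<rho>^N"
proof (induction N k rule: level_induct)
  case B then show ?case using base01 by simp
next
  case (S N j)
  have "\<rho> * (r (Suc N) j - l (Suc N) j) \<le> \<rho> * \<rho>^N" using S rho by (simp)
  then show ?case using step[OF S(1)] by (auto simp del: max_less_iff_conj)
qed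

lemma m_bounds: "k < 2^N \<Longrightarrow> 0 \<le> l (Suc N) k \<and> l (Suc N) k < m (Suc N) k \<and> m (Suc N) k < r (Suc N) k \<and> r (Suc N) k \<le> 1"
  using lr_bounds step by fastforce

lemma adjacent: "k + 1 < 2^N \<Longrightarrow> r (Suc N) k = l (Suc N) (k+1)"
proof (induction N arbitrary: k)
  case 0 then show ?case by simp
next
  case (Suc N)
  have k: "k = 2*(k div 2) + k mod 2" by simp
  have kd: "k div 2 < 2^N" using Suc.prems by auto
  have "k mod 2 = 0 \<or> k mod 2 = 1" by auto
  then show ?case
  proof
    assume "k mod 2 = 0"
    then have "k = 2*(k div 2)" by presburger
    then show ?thesis using step[OF kd] by (metis Suc_eq_plus1 add_Suc_right)
  next
    assume h: "k mod 2 = 1"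
    then have k2: "k = 2*(k div 2) + 1" using div_mult_mod_eq[of k 2] by linarith
    have "k+1 = 2*(k div 2 + 1)" using h by presburger
    then have "k div 2 + 1 < 2^N" using Suc.prems by simp
    then have "r (Suc N) (k div 2) = l (Suc N) (k div 2 + 1)" using Suc.IH by blast
    moreover have "k div 2 + 1 < 2^N" using \<open>k div 2 + 1 < 2^N\<close> .
    ultimately show ?thesis using step[OF kd] step[OF \<open>k div 2 + 1 < 2^N\<close>] k2 \<open>k+1 = 2*(k div 2 + 1)\<close>
      by (metis Suc_eq_plus1)
  qed
qed

lemma ordered: "j < k \<Longrightarrow> k < 2^N \<Longrightarrow> r (Suc N) j \<le> l (Suc N) k"
proof (induction k)
  case 0 then show ?case by simp
next
  case (Suc k)
  show ?case
  proof (cases "j = k")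
    case True then show ?thesis using adjacent[of k N] Suc.prems by simp
  next
    case False
    then have "r (Suc N) j \<le> l (Suc N) k" using Suc by simp
    also have "\<dots> \<le> r (Suc N) k" using lr_bounds[of k N] Suc.prems by simp
    also have "\<dots> = l (Suc N) (Suc k)" using adjacent[of k N] Suc.prems by simp
    finally show ?thesis .
  qed
qed

lemma same_level_out:
  assumes "j < 2^N" "k < 2^N"
  shows "l (Suc N) j \<notin> {l (Suc N) k<..<r (Suc N) k} \<and> r (Suc N) j \<notin> {l (Suc N) k<..<r (Suc N) k}"
proof -
  consider "j = k" | "j < k" | "k < j" by linarith
  then show ?thesis
  proof cases
    case 2 then show ?thesis using ordered[of j k N] lr_bounds[of j N] assms by auto
  next
    case 3 then show ?thesis using ordered[of k j N] lr_bounds[of j N] assms by auto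
  qed auto
qed

lemma child_sub:
  assumes "k < 2^(Suc N)"
  shows "{l (Suc (Suc N)) k<..<r (Suc (Suc N)) k} \<subseteq> {l (Suc N) (k div 2)<..<r (Suc N) (k div 2)}"
proof -
  have kd: "k div 2 < 2^N" using assms by auto
  have "k mod 2 = 0 \<or> k mod 2 = 1" by auto
  then show ?thesis
  proof
    assume "k mod 2 = 0"
    then have "k = 2*(k div 2)" by presburger
    then show ?thesis using step[OF kd] by (metis greaterThanLessThan_subseteq_greaterThanLessThan order_refl order.strict_implies_order)
  next
    assume "k mod 2 = 1"
    then have "k = 2*(k div 2)+1" by presburger
    then show ?thesis using step[OF kd] by (metis greaterThanLessThan_subseteq_greaterThanLessThan order_refl order.strict_implies_order)
  qed
qed

lemma level_out:
  assumes "M \<le> N" "j < 2^M" "k < 2^N"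
  shows "l (Suc M) j \<notin> {l (Suc N) k<..<r (Suc N) k} \<and> r (Suc M) j \<notin> {l (Suc N) k<..<r (Suc N) k}"
  using assms
proof (induction N arbitrary: k)
  case 0 then show ?case using same_level_out by simp
next
  case (Suc N)
  show ?case
  proof (cases "M = Suc N")
    case True then show ?thesis using same_level_out Suc.prems by simp
  next
    case False
    then have "M \<le> N" using Suc.prems by simp
    moreover have "k div 2 < 2^N" using Suc.prems by auto
    ultimately have "l (Suc M) j \<notin> {l (Suc N) (k div 2)<..<r (Suc N) (k div 2)} \<and>
       r (Suc M) j \<notin> {l (Suc N) (k div 2)<..<r (Suc N) (k div 2)}" using Suc.IH Suc.prems by blast
    then show ?thesis using child_sub[OF Suc.prems(3)] by blast
  qed
qed

lemma tile_sum:
  fixes \<Phi> :: "real \<Rightarrow> real \<Rightarrow> 'a::comm_monoid_add"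
  assumes add: "\<And>N k. k < 2^N \<Longrightarrow> \<Phi> (l (Suc N) k) (r (Suc N) k) = \<Phi> (l (Suc N) k) (m (Suc N) k) + \<Phi> (m (Suc N) k) (r (Suc N) k)"
  shows "(\<Sum>k<2^N. \<Phi> (l (Suc N) k) (r (Suc N) k)) = \<Phi> 0 1"
proof (induction N)
  case 0 then show ?case using base01 by simp
next
  case (Suc N)
  have "(\<Sum>k<2^Suc N. \<Phi> (l (Suc (Suc N)) k) (r (Suc (Suc N)) k)) =
     (\<Sum>j<2^N. \<Phi> (l (Suc (Suc N)) (2*j)) (r (Suc (Suc N)) (2*j)) + \<Phi> (l (Suc (Suc N)) (2*j+1)) (r (Suc (Suc N)) (2*j+1)))"
    using sum_even_odd_split[of "\<lambda>k. \<Phi> (l (Suc (Suc N)) k) (r (Suc (Suc N)) k)" "2^N"] by simp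
  also have "\<dots> = (\<Sum>j<2^N. \<Phi> (l (Suc N) j) (r (Suc N) j))"
  proof (rule sum.cong)
    fix j assume "j \<in> {..<(2::nat)^N}"
    then have j: "j < 2^N" by simp
    show "\<Phi> (l (Suc (Suc N)) (2*j)) (r (Suc (Suc N)) (2*j)) + \<Phi> (l (Suc (Suc N)) (2*j+1)) (r (Suc (Suc N)) (2*j+1))
      = \<Phi> (l (Suc N) j) (r (Suc N) j)"
      unfolding step[OF j] add[OF j] ..
  qed simp
  finally show ?case using Suc.IH by simp
qed

lemma tile_pred:
  assumes comb: "\<And>N k. k < 2^N \<Longrightarrow> P (l (Suc N) k) (m (Suc N) k) \<Longrightarrow> P (m (Suc N) k) (r (Suc N) k) \<Longrightarrow> P (l (Suc N) k) (r (Suc N) k)"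
  shows "(\<And>k. k < 2^N \<Longrightarrow> P (l (Suc N) k) (r (Suc N) k)) \<Longrightarrow> P 0 1"
proof (induction N)
  case 0 then show ?case using base01 by force
next
  case (Suc N)
  show ?case
  proof (rule Suc.IH)
    fix k assume k: "k < (2::nat)^N"
    have "2*k < 2^Suc N" "2*k+1 < 2^Suc N" using k by auto
    then show "P (l (Suc N) k) (r (Suc N) k)"
      using Suc.prems comb[OF k] step[OF k] by metis
  qed
qed

end

lemma IC_cont: "continuous_on {0..1} (c::real\<Rightarrow>real) \<Longrightarrow> continuous_on {0..1} (\<lambda>s. integral {0..s} c)"
  by (rule indefinite_integral_continuous_1, rule integrable_continuous_real)

lemma IC_deriv:
  assumes "continuous_on {0..1} (c::real\<Rightarrow>real)" "t \<in> {0<..<1}"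
  shows "((\<lambda>s. integral {0..s} c) has_real_derivative c t) (at t)"
proof -
  have "((\<lambda>s. integral {0..s} c) has_real_derivative c t) (at t within {0..1})"
    using assms by (intro integral_has_real_derivative) auto
  moreover have "at t within {0..1} = at t"
    using assms(2) by (intro at_within_interior) simp
  ultimately show ?thesis by simp
qed

lemma integral_pos_real:
  fixes q :: "real \<Rightarrow> real"
  assumes "a < b" "continuous_on {a..b} q" "\<And>t. t \<in> {a..b} \<Longrightarrow> q t > 0"
  shows "integral {a..b} q > 0"
proof -
  obtain x where x: "x \<in> {a..b}" "\<And>y. y \<in> {a..b} \<Longrightarrow> q x \<le> q y"
    using continuous_attains_inf[of "{a..b}" q] assms by auto
  have "integral {a..b} (\<lambda>_. q x) \<le> integral {a..b} q"
    using x assms by (intro integral_le integrable_continuous_real) auto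
  moreover have "integral {a..b} (\<lambda>_. q x) = (b - a) * q x" using assms by simp
  moreover have "(b - a) * q x > 0" using assms x by simp
  ultimately show ?thesis by linarith
qed

locale setting = npart +
  fixes sG \<alpha> \<beta> :: "real \<Rightarrow> real"
  assumes cont_sG: "continuous_on {0..1} sG" and pos_sG: "\<And>t. t \<in> {0..1} \<Longrightarrow> sG t > 0"
    and cont_a: "continuous_on {0..1} \<alpha>" and cont_b: "continuous_on {0..1} \<beta>"
begin

lemma gf_pos: "gf c t > 0" unfolding gf_def by simp

lemma gf_cont: "continuous_on {0..1} c \<Longrightarrow> continuous_on {0..1} (gf c)"
  unfolding gf_def by (intro continuous_intros IC_cont)

lemma gf_deriv: "continuous_on {0..1} c \<Longrightarrow> t \<in> {0<..<1} \<Longrightarrow> (gf c has_real_derivative c t * gf c t) (at t)"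
  unfolding gf_def[abs_def]
  by (rule derivative_eq_intros IC_deriv | assumption | simp)+

lemma gf_0: "gf c 0 = 1" unfolding gf_def by simp

lemma ff_eq: "ff sG c t = sG t / gf c t"
  unfolding ff_def gf_def by (simp add: exp_minus field_simps)

lemma ff_cont: "continuous_on {0..1} c \<Longrightarrow> continuous_on {0..1} (ff sG c)"
  unfolding ff_def[abs_def] by (intro continuous_intros IC_cont cont_sG)

lemma ff_pos: "t \<in> {0..1} \<Longrightarrow> ff sG c t > 0"
  unfolding ff_def using pos_sG by simp

lemma ff2_cont: "continuous_on {0..1} c \<Longrightarrow> continuous_on {0..1} (\<lambda>t. (ff sG c t)^2)"
  by (intro continuous_intros ff_cont)

lemma hf_deriv: "continuous_on {0..1} c \<Longrightarrow> t \<in> {0<..<1} \<Longrightarrow> (hf sG c has_real_derivative (ff sG c t)^2) (at t)"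
  unfolding hf_def[abs_def] by (intro IC_deriv ff2_cont)

lemma hf_cont: "continuous_on {0..1} c \<Longrightarrow> continuous_on {0..1} (hf sG c)"
  unfolding hf_def[abs_def] by (intro IC_cont ff2_cont)

lemma hh_integral:
  assumes "continuous_on {0..1} c" "0 \<le> a" "a \<le> b" "b \<le> 1"
  shows "hh sG c a b = integral {a..b} (\<lambda>t. (ff sG c t)^2)"
proof -
  have "(\<lambda>t. (ff sG c t)^2) integrable_on {0..b}"
    using assms by (intro integrable_continuous_real continuous_on_subset[OF ff2_cont]) auto
  then have "integral {0..a} (\<lambda>t. (ff sG c t)^2) + integral {a..b} (\<lambda>t. (ff sG c t)^2) = integral {0..b} (\<lambda>t. (ff sG c t)^2)"
    using assms by (intro Henstock_Kurzweil_Integration.integral_combine) auto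
  then show ?thesis unfolding hh_def hf_def by linarith
qed

lemma hh_pos:
  assumes "continuous_on {0..1} c" "0 \<le> a" "a < b" "b \<le> 1"
  shows "hh sG c a b > 0"
proof -
  have "\<And>t. t \<in> {a..b} \<Longrightarrow> (ff sG c t)^2 > 0"
  proof -
    fix t assume "t \<in> {a..b}"
    then have "t \<in> {0..1}" using assms by auto
    then show "(ff sG c t)^2 > 0" using ff_pos[of t c] by simp
  qed
  then show ?thesis
  unfolding hh_integral[OF assms(1,2) less_imp_le[OF assms(3)] assms(4)]
  using assms by (intro integral_pos_real continuous_on_subset[OF ff2_cont] ) auto
qed

lemma hh_add: "hh sG c a b + hh sG c b d = hh sG c a d" unfolding hh_def by simp
lemma hh_same: "hh sG c a a = 0" unfolding hh_def by simp

end

lemma alg0: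
  fixes h1 h2 H A B C A' B' C' :: real
  assumes "h1 > 0" "h2 > 0" "H = h1 + h2"
  shows "B*B'*H/(h1*h2) - B*(A'/h1 + C'/h2) - B'*(A/h1+C/h2) + (h1*h2/H)*(A/h1+C/h2)*(A'/h1+C'/h2)
     = (B-A)*(B'-A')/h1 + (C-B)*(C'-B')/h2 - (C-A)*(C'-A')/H"
proof -
  have "H > 0" using assms by simp
  then have "h1*h2*H*(B*B'*H/(h1*h2) - B*(A'/h1 + C'/h2) - B'*(A/h1+C/h2) + (h1*h2/H)*(A/h1+C/h2)*(A'/h1+C'/h2))
     = h1*h2*H*((B-A)*(B'-A')/h1 + (C-B)*(C'-B')/h2 - (C-A)*(C'-A')/H)"
    using assms(1,2) by (simp add: field_simps) (simp add: assms(3) algebra_simps)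
  then show ?thesis using assms \<open>H>0\<close> by simp
qed

lemma alg:
  fixes h1 h2 w A B C A' B' C' :: real
  assumes "h1 > 0" "h2 > 0" "w > 0" "w^2 = h1*h2/(h1+h2)"
  shows "(B/w - w*A/h1 - w*C/h2)*(B'/w - w*A'/h1 - w*C'/h2) = (B-A)*(B'-A')/h1 + (C-B)*(C'-B')/h2 - (C-A)*(C'-A')/(h1+h2)"
proof -
  have ss2: "w*w = h1*h2/(h1+h2)" using assms(4) by (simp add: power2_eq_square)
  have "(B/w - w*A/h1 - w*C/h2)*(B'/w - w*A'/h1 - w*C'/h2) = B*B'/(w*w) - B*(A'/h1 + C'/h2) - B'*(A/h1+C/h2) + (w*w)*(A/h1+C/h2)*(A'/h1+C'/h2)"
    using assms by (simp add: field_simps)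
  also have "\<dots> = B*B'*(h1+h2)/(h1*h2) - B*(A'/h1 + C'/h2) - B'*(A/h1+C/h2) + (h1*h2/(h1+h2))*(A/h1+C/h2)*(A'/h1+C'/h2)"
    unfolding ss2 using assms by simp
  also have "\<dots> = (B-A)*(B'-A')/h1 + (C-B)*(C'-B')/h2 - (C-A)*(C'-A')/(h1+h2)"
    by (rule alg0[OF assms(1,2) refl])
  finally show ?thesis .
qed

definition FN :: "nat \<Rightarrow> (nat \<times> nat) set" where
  "FN N = {(0,0)} \<union> Sigma {1..N} (\<lambda>n. {..<2^(n-1)})"

lemma FN_finite: "finite (FN N)" unfolding FN_def by auto

lemma FN_Suc: "FN (Suc N) = FN N \<union> (\<lambda>k. (Suc N, k)) ` {..<2^N}"
  unfolding FN_def by (auto simp: image_iff le_Suc_eq)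

lemma FN_disj: "FN N \<inter> (\<lambda>k. (Suc N, k)) ` {..<2^N} = {}"
  unfolding FN_def by auto

lemma FN_sub: "FN N \<subseteq> idx" unfolding FN_def idx_def by auto

lemma FN_mono: "N \<le> M \<Longrightarrow> FN N \<subseteq> FN M" unfolding FN_def by auto

lemma FN_cover: "finite X \<Longrightarrow> X \<subseteq> idx \<Longrightarrow> \<exists>N. X \<subseteq> FN N"
proof -
  assume X: "finite X" "X \<subseteq> idx"
  have "X \<subseteq> FN (Max (insert 0 (fst ` X)))"
  proof
    fix ij assume ij: "ij \<in> X"
    obtain i j where e: "ij = (i,j)" by force
    have "i \<le> Max (insert 0 (fst ` X))" using X ij e by (intro Max_ge) force+
    then show "ij \<in> FN (Max (insert 0 (fst ` X)))" using X ij e unfolding FN_def idx_def by auto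
  qed
  then show ?thesis by blast
qed

context setting
begin

definition Xv :: "(real \<Rightarrow> real) \<Rightarrow> real \<Rightarrow> real \<Rightarrow> real" where
  "Xv x a b = x b / gf \<beta> b - x a / gf \<beta> a"

lemma hhB_pos: "0 \<le> a \<Longrightarrow> a < b \<Longrightarrow> b \<le> 1 \<Longrightarrow> hh sG \<beta> a b > 0"
  by (rule hh_pos[OF cont_b])

lemma delta_node:
  assumes k: "k < 2^N"
  shows "Delta sG \<beta> l m r (Suc N, k) x =
     (x (m (Suc N) k) / gf \<beta> (m (Suc N) k)) / sqrt (hh sG \<beta> (l (Suc N) k) (m (Suc N) k)*hh sG \<beta> (m (Suc N) k) (r (Suc N) k)/(hh sG \<beta> (l (Suc N) k) (m (Suc N) k)+hh sG \<beta> (m (Suc N) k) (r (Suc N) k)))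
       - sqrt (hh sG \<beta> (l (Suc N) k) (m (Suc N) k)*hh sG \<beta> (m (Suc N) k) (r (Suc N) k)/(hh sG \<beta> (l (Suc N) k) (m (Suc N) k)+hh sG \<beta> (m (Suc N) k) (r (Suc N) k))) * (x (l (Suc N) k) / gf \<beta> (l (Suc N) k)) / hh sG \<beta> (l (Suc N) k) (m (Suc N) k)
       - sqrt (hh sG \<beta> (l (Suc N) k) (m (Suc N) k)*hh sG \<beta> (m (Suc N) k) (r (Suc N) k)/(hh sG \<beta> (l (Suc N) k) (m (Suc N) k)+hh sG \<beta> (m (Suc N) k) (r (Suc N) k))) * (x (r (Suc N) k) / gf \<beta> (r (Suc N) k)) / hh sG \<beta> (m (Suc N) k) (r (Suc N) k)"
proof -
  define a c b where "a = l (Suc N) k" "c = m (Suc N) k" "b = r (Suc N) k"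
  define h1 h2 where "h1 = hh sG \<beta> a c" "h2 = hh sG \<beta> c b"
  define w where "w = sqrt (h1*h2/(h1+h2))"
  have pos: "h1 > 0" "h2 > 0" unfolding h1_h2_def a_c_b_def using m_bounds[OF k]
    by (auto intro!: hhB_pos)
  have hlr: "hh sG \<beta> a b = h1 + h2" unfolding h1_h2_def by (simp add: hh_add)
  have g: "gf \<beta> c > 0" by (rule gf_pos)
  have wp: "w > 0" using pos unfolding w_def by simp
  have hlr': "hh sG \<beta> (l (Suc N) k) (r (Suc N) k) = hh sG \<beta> (l (Suc N) k) (m (Suc N) k) + hh sG \<beta> (m (Suc N) k) (r (Suc N) k)"
    by (simp add: hh_add)
  have sg: "sig sG \<beta> l m r (Suc N, k) = gf \<beta> c * w"
    unfolding sig_def w_def h1_h2_def a_c_b_def using hlr' by simp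
  have D: "Delta sG \<beta> l m r (Suc N, k) x = Mc sG \<beta> l m r (Suc N, k) * x c / gf \<beta> c
     - Lc sG \<beta> l m r (Suc N, k) * x a / gf \<beta> a - Rc sG \<beta> l m r (Suc N, k) * x b / gf \<beta> b"
    unfolding Delta_def a_c_b_def by simp
  have M: "Mc sG \<beta> l m r (Suc N, k) = 1 / w" unfolding Mc_def sg using g wp a_c_b_def by simp
  have L: "Lc sG \<beta> l m r (Suc N, k) = w / h1" unfolding Lc_def sg using g wp a_c_b_def h1_h2_def by simp
  have R: "Rc sG \<beta> l m r (Suc N, k) = w / h2" unfolding Rc_def sg using g wp a_c_b_def h1_h2_def by simp
  show ?thesis
    unfolding D M L R a_c_b_def[symmetric] h1_h2_def[symmetric] w_def[symmetric]
    by (simp add: ac_simps)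
qed

lemma delta_node_prod:
  assumes k: "k < 2^N"
  defines "a \<equiv> l (Suc N) k" and "c \<equiv> m (Suc N) k" and "b \<equiv> r (Suc N) k"
  shows "Delta sG \<beta> l m r (Suc N, k) x * Delta sG \<beta> l m r (Suc N, k) y =
     Xv x a c * Xv y a c / hh sG \<beta> a c + Xv x c b * Xv y c b / hh sG \<beta> c b - Xv x a b * Xv y a b / hh sG \<beta> a b"
proof -
  define h1 where "h1 = hh sG \<beta> a c"
  define h2 where "h2 = hh sG \<beta> c b"
  have pos: "h1 > 0" "h2 > 0" unfolding h1_def h2_def a_def b_def c_def using m_bounds[OF k]
    by (auto intro!: hhB_pos)
  have hlr: "hh sG \<beta> a b = h1 + h2" unfolding h1_def h2_def by (simp add: hh_add)
  have w: "sqrt (h1*h2/(h1+h2)) > 0" using pos by simp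
  have w2: "(sqrt (h1*h2/(h1+h2)))^2 = h1*h2/(h1+h2)" using pos by simp
  show ?thesis
    unfolding delta_node[OF k] a_def[symmetric] b_def[symmetric] c_def[symmetric] h1_def[symmetric] h2_def[symmetric] hlr
    unfolding Xv_def using alg[OF pos w w2, where A="x a / gf \<beta> a" and B="x c/gf \<beta> c" and C="x b/gf \<beta> b"
       and A'="y a / gf \<beta> a" and B'="y c/gf \<beta> c" and C'="y b/gf \<beta> b"] by simp
qed

lemma delta_root_prod:
  assumes "x 0 = 0" "y 0 = 0"
  shows "Delta sG \<beta> l m r (0,0) x * Delta sG \<beta> l m r (0,0) y = Xv x 0 1 * Xv y 0 1 / hh sG \<beta> 0 1"
proof -
  have h: "hh sG \<beta> 0 1 > 0" by (rule hhB_pos) auto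
  have g: "gf \<beta> 1 > 0" by (rule gf_pos)
  have s: "sqrt (hh sG \<beta> 0 1) * sqrt (hh sG \<beta> 0 1) = hh sG \<beta> 0 1" using h by simp
  show ?thesis
    unfolding Delta_def Lc_def sig_def Xv_def using assms h g gf_0
    by (simp add: field_simps s)
qed

lemma sumA:
  assumes "x 0 = 0" "y 0 = 0"
  shows "(\<Sum>ij\<in>FN N. Delta sG \<beta> l m r ij x * Delta sG \<beta> l m r ij y) =
     (\<Sum>k<2^N. Xv x (l (Suc N) k) (r (Suc N) k) * Xv y (l (Suc N) k) (r (Suc N) k) / hh sG \<beta> (l (Suc N) k) (r (Suc N) k))"
proof (induction N)
  case 0
  show ?case using delta_root_prod[of x y, OF assms] base01 by (simp add: FN_def)
next
  case (Suc N)
  let ?T = "\<lambda>a b. Xv x a b * Xv y a b / hh sG \<beta> a b"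
  have "(\<Sum>ij\<in>FN (Suc N). Delta sG \<beta> l m r ij x * Delta sG \<beta> l m r ij y) =
     (\<Sum>ij\<in>FN N. Delta sG \<beta> l m r ij x * Delta sG \<beta> l m r ij y) +
     (\<Sum>ij\<in>(\<lambda>k. (Suc N, k)) ` {..<2^N}. Delta sG \<beta> l m r ij x * Delta sG \<beta> l m r ij y)"
    unfolding FN_Suc by (rule sum.union_disjoint) (auto simp: FN_finite FN_disj)
  also have "(\<Sum>ij\<in>(\<lambda>k. (Suc N, k)) ` {..<2^N}. Delta sG \<beta> l m r ij x * Delta sG \<beta> l m r ij y)
     = (\<Sum>k<2^N. Delta sG \<beta> l m r (Suc N, k) x * Delta sG \<beta> l m r (Suc N, k) y)"
    by (subst sum.reindex) (auto simp: inj_on_def)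
  also have "\<dots> = (\<Sum>k<2^N. ?T (l (Suc N) k) (m (Suc N) k) + ?T (m (Suc N) k) (r (Suc N) k) - ?T (l (Suc N) k) (r (Suc N) k))"
    by (rule sum.cong) (auto simp: delta_node_prod)
  finally have e1: "(\<Sum>ij\<in>FN (Suc N). Delta sG \<beta> l m r ij x * Delta sG \<beta> l m r ij y) =
     (\<Sum>k<2^N. ?T (l (Suc N) k) (m (Suc N) k) + ?T (m (Suc N) k) (r (Suc N) k))"
    unfolding Suc.IH by (simp add: sum_subtractf)
  have "(\<Sum>k<2^Suc N. ?T (l (Suc (Suc N)) k) (r (Suc (Suc N)) k)) =
     (\<Sum>j<2^N. ?T (l (Suc (Suc N)) (2*j)) (r (Suc (Suc N)) (2*j)) + ?T (l (Suc (Suc N)) (2*j+1)) (r (Suc (Suc N)) (2*j+1)))"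
    using sum_even_odd_split[of "\<lambda>k. ?T (l (Suc (Suc N)) k) (r (Suc (Suc N)) k)" "2^N"] by simp
  also have "\<dots> = (\<Sum>k<2^N. ?T (l (Suc N) k) (m (Suc N) k) + ?T (m (Suc N) k) (r (Suc N) k))"
  proof (rule sum.cong)
    fix j assume "j \<in> {..<(2::nat)^N}"
    then have j: "j < 2^N" by simp
    show "?T (l (Suc (Suc N)) (2*j)) (r (Suc (Suc N)) (2*j)) + ?T (l (Suc (Suc N)) (2*j+1)) (r (Suc (Suc N)) (2*j+1))
      = ?T (l (Suc N) j) (m (Suc N) j) + ?T (m (Suc N) j) (r (Suc N) j)"
      unfolding step[OF j] ..
  qed simp
  finally show ?case using e1 by simp
qed

end

context setting
begin

definition uu :: "nat \<times> nat \<Rightarrow> real \<Rightarrow> real" where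
  "uu nk t = phi sG \<alpha> l m r nk t + (\<alpha> t - \<beta> t) / sG t * psi sG \<alpha> l m r nk t"

definition Wf :: "(real \<Rightarrow> real) \<Rightarrow> (real \<Rightarrow> real) \<Rightarrow> real \<Rightarrow> real" where
  "Wf K K' t = gf \<alpha> t * gf \<beta> t * (K' t + (\<alpha> t - \<beta> t) * K t) / (sG t)^2"

lemma Wf_cont:
  assumes "continuous_on {0..1} K" "continuous_on {0..1} K'"
  shows "continuous_on {0..1} (Wf K K')"
proof -
  have "\<And>t. t \<in> {0..1} \<Longrightarrow> (sG t)^2 \<noteq> 0" using pos_sG by force
  then show ?thesis unfolding Wf_def[abs_def]
    by (intro continuous_intros gf_cont cont_a cont_b cont_sG assms) auto
qed

lemma GP:
  assumes ab: "0 \<le> a" "a < b" "b \<le> 1"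
    and psiK: "\<And>t. t \<in> {a..b} \<Longrightarrow> psi sG \<alpha> l m r nk t = gf \<alpha> t * K t"
    and Kc: "continuous_on {0..1} K"
    and KD: "\<And>s. s \<in> {a<..<b} \<Longrightarrow> (K has_real_derivative K' s) (at s)"
  shows "\<And>s. s \<in> {a<..<b} \<Longrightarrow> uu nk s = ff sG \<beta> s * Wf K K' s"
    and "((\<lambda>s. (ff sG \<beta> s)^2 * Wf K K' s) has_integral Xv (psi sG \<alpha> l m r nk) a b) {a..b}"
proof -
  fix s assume s: "s \<in> {a<..<b}"
  have s01: "s \<in> {0..1}" using s ab by auto
  have "((\<lambda>t. psi sG \<alpha> l m r nk t / gf \<alpha> t) has_real_derivative K' s) (at s)"
  proof (rule has_field_derivative_transform_within_open[OF KD[OF s] open_greaterThanLessThan s])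
    fix t assume "t \<in> {a<..<b}"
    then show "K t = psi sG \<alpha> l m r nk t / gf \<alpha> t" using psiK[of t] gf_pos[of \<alpha> t] by simp
  qed
  then have "phi sG \<alpha> l m r nk s = K' s / ff sG \<alpha> s"
    unfolding phi_def by (simp add: DERIV_imp_deriv)
  then show "uu nk s = ff sG \<beta> s * Wf K K' s"
    unfolding uu_def Wf_def ff_eq psiK[of s] using s psiK[of s] pos_sG[OF s01] gf_pos[of \<alpha> s] gf_pos[of \<beta> s]
    by (simp add: field_simps power2_eq_square)
next
  have ctn: "continuous_on {a..b} (\<lambda>t. psi sG \<alpha> l m r nk t / gf \<beta> t)"
  proof -
    have "continuous_on {a..b} (\<lambda>t. gf \<alpha> t * K t / gf \<beta> t)"
      using ab gf_pos[of \<beta>, THEN less_imp_neq]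
      by (intro continuous_intros continuous_on_subset[OF gf_cont[OF cont_a]]
          continuous_on_subset[OF gf_cont[OF cont_b]] continuous_on_subset[OF Kc]) (auto simp: gf_pos[of \<beta>, THEN less_imp_neq, symmetric])
    then show ?thesis by (rule continuous_on_eq) (simp add: psiK)
  qed
  show "((\<lambda>s. (ff sG \<beta> s)^2 * Wf K K' s) has_integral Xv (psi sG \<alpha> l m r nk) a b) {a..b}"
    unfolding Xv_def
  proof (rule fundamental_theorem_of_calculus_interior[OF _ ctn])
    show "a \<le> b" using ab by simp
    fix s assume s: "s \<in> {a<..<b}"
    have s01: "s \<in> {0<..<1}" using s ab by auto
    have d: "((\<lambda>t. gf \<alpha> t * K t / gf \<beta> t) has_real_derivative
        ((\<alpha> s * gf \<alpha> s * K s + K' s * gf \<alpha> s) * gf \<beta> s - gf \<alpha> s * K s * (\<beta> s * gf \<beta> s)) / (gf \<beta> s * gf \<beta> s)) (at s)"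
    proof -
      have d1: "((\<lambda>x. gf \<alpha> x * K x) has_real_derivative \<alpha> s * gf \<alpha> s * K s + K' s * gf \<alpha> s) (at s)"
        using DERIV_mult[OF gf_deriv[OF cont_a s01] KD[OF s]] by simp
      show ?thesis using DERIV_divide[OF d1 gf_deriv[OF cont_b s01]] gf_pos[of \<beta> s]
        by (simp add: power2_eq_square)
    qed
    have "((\<lambda>t. psi sG \<alpha> l m r nk t / gf \<beta> t) has_real_derivative
        ((\<alpha> s * gf \<alpha> s * K s + K' s * gf \<alpha> s) * gf \<beta> s - gf \<alpha> s * K s * (\<beta> s * gf \<beta> s)) / (gf \<beta> s * gf \<beta> s)) (at s)"
    proof (rule has_field_derivative_transform_within_open[OF d open_greaterThanLessThan s])
      fix t assume "t \<in> {a<..<b}"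
      then show "gf \<alpha> t * K t / gf \<beta> t = psi sG \<alpha> l m r nk t / gf \<beta> t" using psiK[of t] by simp
    qed
    moreover have "((\<alpha> s * gf \<alpha> s * K s + K' s * gf \<alpha> s) * gf \<beta> s - gf \<alpha> s * K s * (\<beta> s * gf \<beta> s)) / (gf \<beta> s * gf \<beta> s)
        = (ff sG \<beta> s)^2 * Wf K K' s"
      unfolding Wf_def ff_eq using pos_sG[of s] s01 gf_pos[of \<alpha> s] gf_pos[of \<beta> s]
      by (simp add: field_simps power2_eq_square)
    ultimately show "((\<lambda>t. psi sG \<alpha> l m r nk t / gf \<beta> t) has_vector_derivative (ff sG \<beta> s)^2 * Wf K K' s) (at s)"
      by (simp add: has_real_derivative_iff_has_vector_derivative)
  qed
qed

end

context setting
begin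

definition KL :: "nat \<times> nat \<Rightarrow> real \<Rightarrow> real" where
  "KL nk t = hh sG \<alpha> (l (fst nk) (snd nk)) t * Lc sG \<alpha> l m r nk"
definition KL' :: "nat \<times> nat \<Rightarrow> real \<Rightarrow> real" where
  "KL' nk t = (ff sG \<alpha> t)^2 * Lc sG \<alpha> l m r nk"
definition KR :: "nat \<times> nat \<Rightarrow> real \<Rightarrow> real" where
  "KR nk t = hh sG \<alpha> t (r (fst nk) (snd nk)) * Rc sG \<alpha> l m r nk"
definition KR' :: "nat \<times> nat \<Rightarrow> real \<Rightarrow> real" where
  "KR' nk t = - ((ff sG \<alpha> t)^2) * Rc sG \<alpha> l m r nk"
definition K0 :: "real \<Rightarrow> real" where
  "K0 t = hh sG \<alpha> 0 t * Lc sG \<alpha> l m r (0,0)"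
definition K0' :: "real \<Rightarrow> real" where
  "K0' t = (ff sG \<alpha> t)^2 * Lc sG \<alpha> l m r (0,0)"

definition Ws :: "nat \<times> nat \<Rightarrow> (real \<Rightarrow> real) set" where
  "Ws nk = (if fst nk = 0 then {Wf K0 K0'} else {Wf (KL nk) (KL' nk), Wf (KR nk) (KR' nk), Wf (\<lambda>_. 0) (\<lambda>_. 0)})"

lemma Ws_finite: "finite (Ws nk)" unfolding Ws_def by auto

lemma hA_cont: "continuous_on {0..1} (\<lambda>t. hh sG \<alpha> c t)" "continuous_on {0..1} (\<lambda>t. hh sG \<alpha> t c)"
  unfolding hh_def by (intro continuous_intros hf_cont[OF cont_a])+

lemma fA2_cont: "continuous_on {0..1} (\<lambda>t. (ff sG \<alpha> t)^2)" by (rule ff2_cont[OF cont_a])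

lemma Ws_cont: "W \<in> Ws nk \<Longrightarrow> continuous_on {0..1} W"
  unfolding Ws_def KL_def KL'_def KR_def KR'_def K0_def K0'_def
  by (auto intro!: Wf_cont continuous_intros hA_cont fA2_cont split: if_splits)

lemma hA_deriv1: "t \<in> {0<..<1} \<Longrightarrow> ((\<lambda>t. hh sG \<alpha> c t * L) has_real_derivative (ff sG \<alpha> t)^2 * L) (at t)"
  unfolding hh_def using hf_deriv[OF cont_a, of t]
  by (auto intro!: derivative_eq_intros)

lemma hA_deriv2: "t \<in> {0<..<1} \<Longrightarrow> ((\<lambda>t. hh sG \<alpha> t c * L) has_real_derivative - ((ff sG \<alpha> t)^2) * L) (at t)"
  unfolding hh_def using hf_deriv[OF cont_a, of t]
  by (auto intro!: derivative_eq_intros)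

lemma FS:
  assumes nk: "nk \<in> idx" and ab: "0 \<le> a" "a < b" "b \<le> 1"
    and nod: "fst nk \<noteq> 0 \<Longrightarrow> l (fst nk) (snd nk) \<notin> {a<..<b} \<and> m (fst nk) (snd nk) \<notin> {a<..<b} \<and> r (fst nk) (snd nk) \<notin> {a<..<b}"
  shows "\<exists>W\<in>Ws nk. (\<forall>s\<in>{a<..<b}. uu nk s = ff sG \<beta> s * W s) \<and>
      ((\<lambda>s. (ff sG \<beta> s)^2 * W s) has_integral Xv (psi sG \<alpha> l m r nk) a b) {a..b}"
proof -
  have sub: "\<And>s. s \<in> {a<..<b} \<Longrightarrow> s \<in> {0<..<1}" using ab by auto
  have gp: "\<exists>W\<in>Ws nk. (\<forall>s\<in>{a<..<b}. uu nk s = ff sG \<beta> s * W s) \<and>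
      ((\<lambda>s. (ff sG \<beta> s)^2 * W s) has_integral Xv (psi sG \<alpha> l m r nk) a b) {a..b}"
    if "Wf K K' \<in> Ws nk" "\<And>t. t \<in> {a..b} \<Longrightarrow> psi sG \<alpha> l m r nk t = gf \<alpha> t * K t"
       "continuous_on {0..1} K" "\<And>s. s \<in> {a<..<b} \<Longrightarrow> (K has_real_derivative K' s) (at s)" for K K'
    using GP[OF ab that(2-4)] that(1) by blast
  show ?thesis
  proof (cases "fst nk = 0")
    case True
    then have e: "nk = (0,0)" using nk unfolding idx_def by auto
    show ?thesis
    proof (rule gp[of K0 K0'])
      show "Wf K0 K0' \<in> Ws nk" using True unfolding Ws_def by simp
      show "psi sG \<alpha> l m r nk t = gf \<alpha> t * K0 t" for t unfolding e psi_def K0_def by simp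
      show "continuous_on {0..1} K0" unfolding K0_def by (intro continuous_intros hA_cont)
      show "(K0 has_real_derivative K0' s) (at s)" if "s \<in> {a<..<b}" for s
        unfolding K0_def K0'_def using hA_deriv1[OF sub[OF that]] .
    qed
  next
    case False
    then obtain N k where e: "nk = (Suc N, k)" and k: "k < 2^N" using nk unfolding idx_def
      by (cases nk) (auto simp: not0_implies_Suc gr0_conv_Suc)
    define lk mk rk where "lk = l (Suc N) k" "mk = m (Suc N) k" "rk = r (Suc N) k"
    have bd: "0 \<le> lk" "lk < mk" "mk < rk" "rk \<le> 1" using m_bounds[OF k] unfolding lk_mk_rk_def by auto
    have nod': "lk \<notin> {a<..<b}" "mk \<notin> {a<..<b}" "rk \<notin> {a<..<b}" using nod False unfolding e lk_mk_rk_def by auto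
    define L R where "L = Lc sG \<alpha> l m r nk" "R = Rc sG \<alpha> l m r nk"
    have psi_eq: "psi sG \<alpha> l m r nk t = (if lk \<le> t \<and> t \<le> mk then gf \<alpha> t * hh sG \<alpha> lk t * L
       else if mk \<le> t \<and> t \<le> rk then gf \<alpha> t * hh sG \<alpha> t rk * R else 0)" for t
      unfolding psi_def e lk_mk_rk_def L_R_def by simp
    have h1: "hh sG \<alpha> lk mk > 0" "hh sG \<alpha> mk rk > 0" using bd by (auto intro!: hh_pos[OF cont_a])
    have LR: "hh sG \<alpha> lk mk * L = hh sG \<alpha> mk rk * R"
      unfolding L_R_def Lc_def Rc_def e lk_mk_rk_def[symmetric] using h1 gf_pos[of \<alpha> mk] unfolding lk_mk_rk_def by simp
    have inWs: "Wf (KL nk) (KL' nk) \<in> Ws nk" "Wf (KR nk) (KR' nk) \<in> Ws nk" "Wf (\<lambda>_. 0) (\<lambda>_. 0) \<in> Ws nk"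
      using False unfolding Ws_def by auto
    have KLe: "KL nk t = hh sG \<alpha> lk t * L" "KL' nk t = (ff sG \<alpha> t)^2 * L" for t
      unfolding KL_def KL'_def e lk_mk_rk_def L_R_def by simp_all
    have KRe: "KR nk t = hh sG \<alpha> t rk * R" "KR' nk t = - ((ff sG \<alpha> t)^2) * R" for t
      unfolding KR_def KR'_def e lk_mk_rk_def L_R_def by simp_all
    have zero: ?thesis if "\<And>t. t \<in> {a..b} \<Longrightarrow> psi sG \<alpha> l m r nk t = 0"
      by (rule gp[of "\<lambda>_. 0" "\<lambda>_. 0"]) (use inWs that in auto)
    have left: ?thesis if "lk \<le> a" "b \<le> mk"
    proof (rule gp[of "KL nk" "KL' nk"])
      show "Wf (KL nk) (KL' nk) \<in> Ws nk" by (rule inWs)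
      show "psi sG \<alpha> l m r nk t = gf \<alpha> t * KL nk t" if "t \<in> {a..b}" for t
        using that \<open>lk \<le> a\<close> \<open>b \<le> mk\<close> unfolding psi_eq KLe by simp
      show "continuous_on {0..1} (KL nk)" unfolding KLe[abs_def] by (intro continuous_intros hA_cont)
      show "(KL nk has_real_derivative KL' nk s) (at s)" if "s \<in> {a<..<b}" for s
        unfolding KLe[abs_def] KLe using hA_deriv1[OF sub[OF that]] .
    qed
    have right: ?thesis if "mk \<le> a" "b \<le> rk"
    proof (rule gp[of "KR nk" "KR' nk"])
      show "Wf (KR nk) (KR' nk) \<in> Ws nk" by (rule inWs)
      show "psi sG \<alpha> l m r nk t = gf \<alpha> t * KR nk t" if "t \<in> {a..b}" for t
      proof (cases "t = mk")
        case True then show ?thesis using that \<open>mk \<le> a\<close> \<open>b \<le> rk\<close> bd LR unfolding psi_eq KRe by simp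
      next
        case False then show ?thesis using that \<open>mk \<le> a\<close> \<open>b \<le> rk\<close> bd unfolding psi_eq KRe by auto
      qed
      show "continuous_on {0..1} (KR nk)" unfolding KRe[abs_def] by (intro continuous_intros hA_cont)
      show "(KR nk has_real_derivative KR' nk s) (at s)" if "s \<in> {a<..<b}" for s
        unfolding KRe[abs_def] KRe using hA_deriv2[OF sub[OF that]] .
    qed
    consider "b \<le> lk" | "lk \<le> a" "b \<le> mk" | "mk \<le> a" "b \<le> rk" | "rk \<le> a"
      using nod' bd ab by force
    then show ?thesis
    proof cases
      case 1
      show ?thesis
      proof (rule zero)
        fix t assume "t \<in> {a..b}"
        then have "t < lk \<or> t = lk" using 1 by auto
        then show "psi sG \<alpha> l m r nk t = 0" using bd by (auto simp: psi_eq hh_same)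
      qed
    next
      case 2 then show ?thesis by (rule left)
    next
      case 3 then show ?thesis by (rule right)
    next
      case 4
      show ?thesis
      proof (rule zero)
        fix t assume "t \<in> {a..b}"
        then have "t > rk \<or> t = rk" using 4 by auto
        then show "psi sG \<alpha> l m r nk t = 0" using bd by (auto simp: psi_eq hh_same)
      qed
    qed
  qed
qed

end

lemma int_bound_open:
  fixes F G :: "real \<Rightarrow> real"
  assumes "F integrable_on {a..b}" "G integrable_on {a..b}" "\<And>t. t \<in> {a<..<b} \<Longrightarrow> \<bar>F t\<bar> \<le> G t"
  shows "\<bar>integral {a..b} F\<bar> \<le> integral {a..b} G"
proof -
  have "norm (integral {a<..<b} F) \<le> integral {a<..<b} G"
    using assms by (intro integral_norm_bound_integral) (auto simp: integrable_on_open_interval_real)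
  then show ?thesis by (simp add: integral_open_interval_real[symmetric])
qed

lemma final_alg:
  fixes Q E1 E2 E3 w0 z0 B e :: real
  assumes "Q > 0" "\<bar>E1\<bar> \<le> e*Q" "\<bar>E2\<bar> \<le> e*Q" "\<bar>E3\<bar> \<le> 2*B*e*Q" "\<bar>w0\<bar> \<le> B" "\<bar>z0\<bar> \<le> B" "e \<ge> 0"
  shows "\<bar>(w0*Q + E1)*(z0*Q + E2)/Q - (w0*z0*Q + E3)\<bar> \<le> (4*B + e)*e*Q"
proof -
  have eq: "(w0*Q + E1)*(z0*Q + E2)/Q - (w0*z0*Q + E3) = w0*E2 + z0*E1 + E1*E2/Q - E3"
    using assms(1) by (simp add: field_simps)
  have b1: "\<bar>w0*E2\<bar> \<le> B*(e*Q)" unfolding abs_mult by (intro mult_mono) (use assms in auto)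
  have b2: "\<bar>z0*E1\<bar> \<le> B*(e*Q)" unfolding abs_mult by (intro mult_mono) (use assms in auto)
  have "\<bar>E1*E2\<bar> \<le> (e*Q)*(e*Q)" unfolding abs_mult by (intro mult_mono) (use assms in auto)
  then have b3: "\<bar>E1*E2/Q\<bar> \<le> e*e*Q" using assms(1) by (simp add: field_simps abs_div)
  have "\<bar>w0*E2 + z0*E1 + E1*E2/Q - E3\<bar> \<le> \<bar>w0*E2\<bar> + \<bar>z0*E1\<bar> + \<bar>E1*E2/Q\<bar> + \<bar>E3\<bar>" by linarith
  also have "\<dots> \<le> (4*B + e)*e*Q" using b1 b2 b3 assms(4) by (simp add: algebra_simps)
  finally show ?thesis unfolding eq .
qed

lemma interval_bound:
  fixes q w z :: "real \<Rightarrow> real"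
  assumes ab: "a < b" and qc: "continuous_on {a..b} q" and qp: "\<And>t. t \<in> {a..b} \<Longrightarrow> q t > 0"
    and i1: "(\<lambda>t. q t * w t) integrable_on {a..b}" and i2: "(\<lambda>t. q t * z t) integrable_on {a..b}"
    and i3: "(\<lambda>t. q t * w t * z t) integrable_on {a..b}"
    and osc: "\<And>s t. s \<in> {a<..<b} \<Longrightarrow> t \<in> {a<..<b} \<Longrightarrow> \<bar>w s - w t\<bar> \<le> e \<and> \<bar>z s - z t\<bar> \<le> e"
    and bnd: "\<And>s. s \<in> {a<..<b} \<Longrightarrow> \<bar>w s\<bar> \<le> B \<and> \<bar>z s\<bar> \<le> B"
    and e: "e \<ge> 0"
  shows "\<bar>integral {a..b} (\<lambda>t. q t * w t) * integral {a..b} (\<lambda>t. q t * z t) / integral {a..b} q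
      - integral {a..b} (\<lambda>t. q t * w t * z t)\<bar> \<le> (4*B + e)*e*integral {a..b} q"
proof -
  define t0 where "t0 = (a+b)/2"
  have t0: "t0 \<in> {a<..<b}" using ab unfolding t0_def by auto
  define Q where "Q = integral {a..b} q"
  have Q: "Q > 0" unfolding Q_def by (rule integral_pos_real[OF ab qc qp])
  have qi: "q integrable_on {a..b}" by (rule integrable_continuous_real[OF qc])
  define w0 z0 where "w0 = w t0" "z0 = z t0"
  have cw: "integral {a..b} (\<lambda>t. q t * c) = c * Q" for c unfolding Q_def by (simp add: integral_mult_left mult.commute)
  have ciw: "(\<lambda>t. q t * c) integrable_on {a..b}" for c using qi by (rule integrable_on_mult_left)
  define E1 where "E1 = integral {a..b} (\<lambda>t. q t * w t - q t * w0)"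
  define E2 where "E2 = integral {a..b} (\<lambda>t. q t * z t - q t * z0)"
  define E3 where "E3 = integral {a..b} (\<lambda>t. q t * w t * z t - q t * (w0*z0))"
  have e1: "integral {a..b} (\<lambda>t. q t * w t) = w0*Q + E1" unfolding E1_def
    by (subst integral_diff[OF i1 ciw]) (simp add: cw Q_def)
  have e2: "integral {a..b} (\<lambda>t. q t * z t) = z0*Q + E2" unfolding E2_def
    by (subst integral_diff[OF i2 ciw]) (simp add: cw Q_def)
  have e3: "integral {a..b} (\<lambda>t. q t * w t * z t) = w0*z0*Q + E3" unfolding E3_def
    by (subst integral_diff[OF i3 ciw]) (simp add: cw Q_def)
  have qpo: "\<And>t. t \<in> {a<..<b} \<Longrightarrow> q t > 0" using qp by auto
  have eq: "integral {a..b} (\<lambda>t. e * q t) = e * Q" unfolding Q_def by simp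
  have E1b: "\<bar>E1\<bar> \<le> e*Q" unfolding E1_def eq[symmetric]
  proof (rule int_bound_open)
    show "(\<lambda>t. q t * w t - q t * w0) integrable_on {a..b}" by (intro integrable_diff i1 ciw)
    show "(\<lambda>t. e * q t) integrable_on {a..b}" using qi by (rule integrable_on_mult_right)
    fix t assume t: "t \<in> {a<..<b}"
    have "\<bar>q t * w t - q t * w0\<bar> = q t * \<bar>w t - w0\<bar>" using qpo[OF t] by (simp add: abs_mult right_diff_distrib[symmetric])
    also have "\<dots> \<le> q t * e" using osc[OF t t0] qpo[OF t] unfolding w0_z0_def by (intro mult_left_mono) auto
    finally show "\<bar>q t * w t - q t * w0\<bar> \<le> e * q t" by (simp add: mult.commute)
  qed
  have E2b: "\<bar>E2\<bar> \<le> e*Q" unfolding E2_def eq[symmetric]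
  proof (rule int_bound_open)
    show "(\<lambda>t. q t * z t - q t * z0) integrable_on {a..b}" by (intro integrable_diff i2 ciw)
    show "(\<lambda>t. e * q t) integrable_on {a..b}" using qi by (rule integrable_on_mult_right)
    fix t assume t: "t \<in> {a<..<b}"
    have "\<bar>q t * z t - q t * z0\<bar> = q t * \<bar>z t - z0\<bar>" using qpo[OF t] by (simp add: abs_mult right_diff_distrib[symmetric])
    also have "\<dots> \<le> q t * e" using osc[OF t t0] qpo[OF t] unfolding w0_z0_def by (intro mult_left_mono) auto
    finally show "\<bar>q t * z t - q t * z0\<bar> \<le> e * q t" by (simp add: mult.commute)
  qed
  have eq3: "integral {a..b} (\<lambda>t. (2*B*e) * q t) = 2*B*e * Q" unfolding Q_def by simp
  have E3b: "\<bar>E3\<bar> \<le> 2*B*e*Q" unfolding E3_def eq3[symmetric]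
  proof (rule int_bound_open)
    show "(\<lambda>t. q t * w t * z t - q t * (w0*z0)) integrable_on {a..b}" by (intro integrable_diff i3 ciw)
    show "(\<lambda>t. (2*B*e) * q t) integrable_on {a..b}" using qi by (rule integrable_on_mult_right)
    fix t assume t: "t \<in> {a<..<b}"
    have wz: "w t * z t - w0 * z0 = w t * (z t - z0) + z0 * (w t - w0)" by (simp add: algebra_simps)
    have "\<bar>w t * (z t - z0)\<bar> \<le> B * e" unfolding abs_mult
      using osc[OF t t0] bnd[OF t] unfolding w0_z0_def by (intro mult_mono) auto
    moreover have "\<bar>z0 * (w t - w0)\<bar> \<le> B * e" unfolding abs_mult
      using osc[OF t t0] bnd[OF t0] unfolding w0_z0_def by (intro mult_mono) auto
    ultimately have "\<bar>w t * z t - w0 * z0\<bar> \<le> 2*B*e" unfolding wz by linarith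
    then have "q t * \<bar>w t * z t - w0 * z0\<bar> \<le> q t * (2*B*e)" using qpo[OF t] by (intro mult_left_mono) auto
    moreover have "\<bar>q t * w t * z t - q t * (w0*z0)\<bar> = q t * \<bar>w t * z t - w0 * z0\<bar>"
    proof -
      have "q t * w t * z t - q t * (w0*z0) = q t * (w t * z t - w0 * z0)" by (simp add: algebra_simps)
      then show ?thesis using qpo[OF t] by (simp add: abs_mult)
    qed
    ultimately show "\<bar>q t * w t * z t - q t * (w0*z0)\<bar> \<le> (2*B*e) * q t" by (simp add: mult.commute)
  qed
  show ?thesis unfolding e1 e2 e3 Q_def[symmetric]
    using final_alg[OF Q E1b E2b E3b _ _ e] bnd[OF t0] unfolding w0_z0_def by auto
qed


context npart
begin

lemma tile_integral:
  fixes F :: "real \<Rightarrow> real"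
  assumes "F integrable_on {0..1}"
  shows "(\<Sum>k<2^N. integral {l (Suc N) k..r (Suc N) k} F) = integral {0..1} F"
proof (rule tile_sum)
  fix N k assume k: "k < (2::nat)^N"
  have "F integrable_on {l (Suc N) k..r (Suc N) k}"
    using m_bounds[OF k] by (intro integrable_subinterval_real[OF assms]) auto
  then show "integral {l (Suc N) k..r (Suc N) k} F = integral {l (Suc N) k..m (Suc N) k} F + integral {m (Suc N) k..r (Suc N) k} F"
    using m_bounds[OF k] by (intro Henstock_Kurzweil_Integration.integral_combine[symmetric]) auto
qed

lemma conv:
  fixes q w z :: "real \<Rightarrow> real"
  assumes qc: "continuous_on {0..1} q" and qp: "\<And>t. t \<in> {0..1} \<Longrightarrow> q t > 0"
    and i1: "(\<lambda>t. q t * w t) integrable_on {0..1}" and i2: "(\<lambda>t. q t * z t) integrable_on {0..1}"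
    and i3: "(\<lambda>t. q t * w t * z t) integrable_on {0..1}"
    and osc: "\<exists>B. \<forall>e>0. \<exists>N0. \<forall>N\<ge>N0. \<forall>k<2^N. \<forall>s\<in>{l (Suc N) k<..<r (Suc N) k}. \<forall>t\<in>{l (Suc N) k<..<r (Suc N) k}.
        \<bar>w s - w t\<bar> \<le> e \<and> \<bar>z s - z t\<bar> \<le> e \<and> \<bar>w s\<bar> \<le> B \<and> \<bar>z s\<bar> \<le> B"
  shows "(\<lambda>N. \<Sum>k<2^N. integral {l (Suc N) k..r (Suc N) k} (\<lambda>t. q t * w t) *
      integral {l (Suc N) k..r (Suc N) k} (\<lambda>t. q t * z t) / integral {l (Suc N) k..r (Suc N) k} q)
     \<longlonglongrightarrow> integral {0..1} (\<lambda>t. q t * w t * z t)"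
proof -
  obtain B where B: "\<forall>e>0. \<exists>N0. \<forall>N\<ge>N0. \<forall>k<2^N. \<forall>s\<in>{l (Suc N) k<..<r (Suc N) k}. \<forall>t\<in>{l (Suc N) k<..<r (Suc N) k}.
        \<bar>w s - w t\<bar> \<le> e \<and> \<bar>z s - z t\<bar> \<le> e \<and> \<bar>w s\<bar> \<le> B \<and> \<bar>z s\<bar> \<le> B" using osc by blast
  define Q01 where "Q01 = integral {0..1} q"
  have Q01: "Q01 > 0" unfolding Q01_def by (rule integral_pos_real[OF _ qc qp]) auto
  have qi: "q integrable_on {0..1}" by (rule integrable_continuous_real[OF qc])
  define C where "C = (4*\<bar>B\<bar> + 1) * Q01"
  have C: "C > 0" unfolding C_def using Q01 by (simp add: add_nonneg_pos)
  show ?thesis unfolding lim_sequentially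
  proof (intro allI impI)
    fix e :: real assume e: "e > 0"
    define \<epsilon> where "\<epsilon> = min 1 (e / (2*C))"
    have ep: "\<epsilon> > 0" "\<epsilon> \<le> 1" "\<epsilon> \<le> e/(2*C)" unfolding \<epsilon>_def using e C by auto
    obtain N0 where N0: "\<forall>N\<ge>N0. \<forall>k<2^N. \<forall>s\<in>{l (Suc N) k<..<r (Suc N) k}. \<forall>t\<in>{l (Suc N) k<..<r (Suc N) k}.
        \<bar>w s - w t\<bar> \<le> \<epsilon> \<and> \<bar>z s - z t\<bar> \<le> \<epsilon> \<and> \<bar>w s\<bar> \<le> B \<and> \<bar>z s\<bar> \<le> B"
      using B ep(1) by blast
    show "\<exists>no. \<forall>N\<ge>no. dist (\<Sum>k<2^N. integral {l (Suc N) k..r (Suc N) k} (\<lambda>t. q t * w t) *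
      integral {l (Suc N) k..r (Suc N) k} (\<lambda>t. q t * z t) / integral {l (Suc N) k..r (Suc N) k} q)
        (integral {0..1} (\<lambda>t. q t * w t * z t)) < e"
    proof (intro exI allI impI)
      fix N assume N: "N0 \<le> N"
      let ?I = "\<lambda>k F. integral {l (Suc N) k..r (Suc N) k} F"
      let ?T = "\<lambda>k. ?I k (\<lambda>t. q t * w t) * ?I k (\<lambda>t. q t * z t) / ?I k q"
      have each: "\<bar>?T k - ?I k (\<lambda>t. q t * w t * z t)\<bar> \<le> (4*\<bar>B\<bar> + 1) * \<epsilon> * ?I k q" if k: "k < 2^N" for k
      proof -
        have bds: "0 \<le> l (Suc N) k" "l (Suc N) k < r (Suc N) k" "r (Suc N) k \<le> 1" using lr_bounds[OF k] by auto
        have sub: "{l (Suc N) k..r (Suc N) k} \<subseteq> {0..1}" using bds by auto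
        have "\<bar>?T k - ?I k (\<lambda>t. q t * w t * z t)\<bar> \<le> (4*\<bar>B\<bar> + \<epsilon>) * \<epsilon> * ?I k q"
        proof (rule interval_bound)
          show "l (Suc N) k < r (Suc N) k" by (rule bds(2))
          show "continuous_on {l (Suc N) k..r (Suc N) k} q" by (rule continuous_on_subset[OF qc sub])
          show "q t > 0" if "t \<in> {l (Suc N) k..r (Suc N) k}" for t using qp that sub by auto
          show "(\<lambda>t. q t * w t) integrable_on {l (Suc N) k..r (Suc N) k}" using sub by (intro integrable_subinterval_real[OF i1]) auto
          show "(\<lambda>t. q t * z t) integrable_on {l (Suc N) k..r (Suc N) k}" using sub by (intro integrable_subinterval_real[OF i2]) auto
          show "(\<lambda>t. q t * w t * z t) integrable_on {l (Suc N) k..r (Suc N) k}" using sub by (intro integrable_subinterval_real[OF i3]) auto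
          show "\<bar>w s - w t\<bar> \<le> \<epsilon> \<and> \<bar>z s - z t\<bar> \<le> \<epsilon>" if "s \<in> {l (Suc N) k<..<r (Suc N) k}" "t \<in> {l (Suc N) k<..<r (Suc N) k}" for s t
            using N0 N k that by blast
          show "\<bar>w s\<bar> \<le> \<bar>B\<bar> \<and> \<bar>z s\<bar> \<le> \<bar>B\<bar>" if "s \<in> {l (Suc N) k<..<r (Suc N) k}" for s
            using N0 N k that by fastforce
          show "\<epsilon> \<ge> 0" using ep by simp
        qed
        also have "\<dots> \<le> (4*\<bar>B\<bar> + 1) * \<epsilon> * ?I k q"
        proof -
          have "?I k q \<ge> 0" using integral_pos_real[OF bds(2) continuous_on_subset[OF qc sub]] qp sub by force
          then show ?thesis using ep by (intro mult_right_mono mult_right_mono) auto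
        qed
        finally show ?thesis .
      qed
      have s1: "(\<Sum>k<2^N. ?I k (\<lambda>t. q t * w t * z t)) = integral {0..1} (\<lambda>t. q t * w t * z t)"
        by (rule tile_integral[OF i3])
      have s2: "(\<Sum>k<2^N. ?I k q) = Q01" unfolding Q01_def by (rule tile_integral[OF qi])
      have s3: "\<bar>(\<Sum>k<2^N. ?T k) - (\<Sum>k<2^N. ?I k (\<lambda>t. q t * w t * z t))\<bar> \<le> (\<Sum>k<2^N. (4*\<bar>B\<bar> + 1) * \<epsilon> * ?I k q)"
      proof -
        have "\<bar>(\<Sum>k<2^N. ?T k) - (\<Sum>k<2^N. ?I k (\<lambda>t. q t * w t * z t))\<bar> = \<bar>\<Sum>k<2^N. ?T k - ?I k (\<lambda>t. q t * w t * z t)\<bar>"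
          by (simp add: sum_subtractf)
        also have "\<dots> \<le> (\<Sum>k<2^N. \<bar>?T k - ?I k (\<lambda>t. q t * w t * z t)\<bar>)" by (rule sum_abs)
        also have "\<dots> \<le> (\<Sum>k<2^N. (4*\<bar>B\<bar> + 1) * \<epsilon> * ?I k q)" by (rule sum_mono) (use each in auto)
        finally show ?thesis .
      qed
      have s4: "(\<Sum>k<2^N. (4*\<bar>B\<bar> + 1) * \<epsilon> * ?I k q) = (4*\<bar>B\<bar> + 1) * \<epsilon> * (\<Sum>k<2^N. ?I k q)"
        by (simp add: sum_distrib_left)
      have s5: "(4*\<bar>B\<bar> + 1) * \<epsilon> * Q01 \<le> e/2"
      proof -
        have "(4*\<bar>B\<bar> + 1) * \<epsilon> * Q01 = C * \<epsilon>" unfolding C_def by simp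
        also have "\<dots> \<le> C * (e/(2*C))" using C ep by (intro mult_left_mono) auto
        also have "\<dots> = e/2" using C by simp
        finally show ?thesis .
      qed
      have "\<bar>(\<Sum>k<2^N. ?T k) - integral {0..1} (\<lambda>t. q t * w t * z t)\<bar> \<le> (4*\<bar>B\<bar> + 1) * \<epsilon> * Q01"
        using s3 unfolding s1 s4 s2 .
      then show "dist (\<Sum>k<2^N. ?T k) (integral {0..1} (\<lambda>t. q t * w t * z t)) < e"
        using e s5 unfolding dist_real_def by linarith
    qed
  qed
qed

end

lemma finite_bound:
  fixes S :: "(real \<Rightarrow> real) set"
  assumes "finite S" "\<And>W. W \<in> S \<Longrightarrow> continuous_on {0..1} W"
  shows "\<exists>B. \<forall>W\<in>S. \<forall>t\<in>{0..1}. \<bar>W t\<bar> \<le> B"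
  using assms
proof (induction S rule: finite_induct)
  case empty then show ?case by simp
next
  case (insert W S)
  obtain B where B: "\<forall>W\<in>S. \<forall>t\<in>{0..1}. \<bar>W t\<bar> \<le> B" using insert by auto
  have "bounded (W ` {0..1})"
    using insert.prems by (intro compact_imp_bounded compact_continuous_image) auto
  then obtain a where a: "\<forall>x\<in>W ` {0..1}. norm x \<le> a" unfolding bounded_iff by blast
  show ?case
    by (rule exI[of _ "max a B"]) (use a B in force)
qed

lemma finite_unif:
  fixes S :: "(real \<Rightarrow> real) set"
  assumes "finite S" "\<And>W. W \<in> S \<Longrightarrow> continuous_on {0..1} W" "e > 0"
  shows "\<exists>d>0. \<forall>W\<in>S. \<forall>s\<in>{0..1}. \<forall>t\<in>{0..1}. \<bar>s - t\<bar> < d \<longrightarrow> \<bar>W s - W t\<bar> < e"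
  using assms
proof (induction S rule: finite_induct)
  case empty then show ?case by (intro exI[of _ 1]) simp
next
  case (insert W S)
  obtain d where d: "d > 0" "\<forall>W\<in>S. \<forall>s\<in>{0..1}. \<forall>t\<in>{0..1}. \<bar>s - t\<bar> < d \<longrightarrow> \<bar>W s - W t\<bar> < e"
    using insert by auto
  have "uniformly_continuous_on {0..1} W"
    using insert.prems by (intro compact_uniformly_continuous) auto
  then obtain d' where d': "d' > 0" "\<forall>x\<in>{0..1}. \<forall>x'\<in>{0..1}. dist x' x < d' \<longrightarrow> dist (W x') (W x) < e"
    unfolding uniformly_continuous_on_def using insert.prems by blast
  show ?case
  proof (intro exI[of _ "min d d'"] conjI)
    show "min d d' > 0" using d d' by simp
    show "\<forall>W'\<in>insert W S. \<forall>s\<in>{0..1}. \<forall>t\<in>{0..1}. \<bar>s - t\<bar> < min d d' \<longrightarrow> \<bar>W' s - W' t\<bar> < e"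
      using d(2) d'(2) by (auto simp: dist_real_def)
  qed
qed

context setting
begin

lemma FS_fine:
  assumes nk: "nk \<in> idx" and N: "fst nk \<le> N" and k: "k < 2^N"
  shows "\<exists>W\<in>Ws nk. (\<forall>s\<in>{l (Suc N) k<..<r (Suc N) k}. uu nk s = ff sG \<beta> s * W s) \<and>
      ((\<lambda>s. (ff sG \<beta> s)^2 * W s) has_integral Xv (psi sG \<alpha> l m r nk) (l (Suc N) k) (r (Suc N) k)) {l (Suc N) k..r (Suc N) k}"
proof (rule FS[OF nk])
  show "0 \<le> l (Suc N) k" "l (Suc N) k < r (Suc N) k" "r (Suc N) k \<le> 1" using lr_bounds[OF k] by auto
  assume ne: "fst nk \<noteq> 0"
  then obtain M j where e: "nk = (Suc M, j)" and j: "j < 2^M" using nk unfolding idx_def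
    by (cases nk) (auto simp: gr0_conv_Suc)
  have MN: "M \<le> N" "Suc M \<le> N" using N e by auto
  have j2: "2*j < 2^Suc M" using j by simp
  have "m (Suc M) j = r (Suc (Suc M)) (2*j)" using step[OF j] by simp
  then show "l (fst nk) (snd nk) \<notin> {l (Suc N) k<..<r (Suc N) k} \<and> m (fst nk) (snd nk) \<notin> {l (Suc N) k<..<r (Suc N) k} \<and>
      r (fst nk) (snd nk) \<notin> {l (Suc N) k<..<r (Suc N) k}"
    using level_out[OF MN(1) j k] level_out[OF MN(2) j2 k] e by simp
qed

definition ww :: "nat \<times> nat \<Rightarrow> real \<Rightarrow> real" where
  "ww nk t = uu nk t / ff sG \<beta> t"

lemma ww_eq:
  assumes "nk \<in> idx" "fst nk \<le> N" "k < 2^N"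
  shows "\<exists>W\<in>Ws nk. (\<forall>s\<in>{l (Suc N) k<..<r (Suc N) k}. ww nk s = W s) \<and>
      ((\<lambda>s. (ff sG \<beta> s)^2 * W s) has_integral Xv (psi sG \<alpha> l m r nk) (l (Suc N) k) (r (Suc N) k)) {l (Suc N) k..r (Suc N) k}"
proof -
  obtain W where W: "W \<in> Ws nk" "\<forall>s\<in>{l (Suc N) k<..<r (Suc N) k}. uu nk s = ff sG \<beta> s * W s"
    "((\<lambda>s. (ff sG \<beta> s)^2 * W s) has_integral Xv (psi sG \<alpha> l m r nk) (l (Suc N) k) (r (Suc N) k)) {l (Suc N) k..r (Suc N) k}"
    using FS_fine[OF assms] by blast
  have "\<forall>s\<in>{l (Suc N) k<..<r (Suc N) k}. ww nk s = W s"
  proof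
    fix s assume s: "s \<in> {l (Suc N) k<..<r (Suc N) k}"
    then have "s \<in> {0..1}" using lr_bounds[OF assms(3)] by auto
    then have "ff sG \<beta> s > 0" by (rule ff_pos)
    then show "ww nk s = W s" unfolding ww_def using W(2) s by simp
  qed
  then show ?thesis using W by blast
qed

lemma rho_small: "d > 0 \<Longrightarrow> \<exists>N0. \<forall>N\<ge>N0. \<rho>^N < d"
proof -
  assume d: "d > 0"
  obtain N0 where "\<rho>^N0 < d" using real_arch_pow_inv[OF d rho(2)] by blast
  moreover have "\<forall>N\<ge>N0. \<rho>^N \<le> \<rho>^N0" using rho by (auto intro!: power_decreasing)
  ultimately show ?thesis by force
qed

lemma OSC:
  assumes nk: "nk \<in> idx"
  shows "\<exists>B. \<forall>e>0. \<exists>N0. \<forall>N\<ge>N0. \<forall>k<2^N. \<forall>s\<in>{l (Suc N) k<..<r (Suc N) k}. \<forall>t\<in>{l (Suc N) k<..<r (Suc N) k}.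
        \<bar>ww nk s - ww nk t\<bar> \<le> e \<and> \<bar>ww nk s\<bar> \<le> B"
proof -
  obtain B where B: "\<forall>W\<in>Ws nk. \<forall>t\<in>{0..1}. \<bar>W t\<bar> \<le> B"
    using finite_bound[OF Ws_finite[of nk] Ws_cont[of _ nk]] by blast
  show ?thesis
  proof (intro exI[of _ B] allI impI)
    fix e :: real assume e: "e > 0"
    obtain d where d: "d > 0" "\<forall>W\<in>Ws nk. \<forall>s\<in>{0..1}. \<forall>t\<in>{0..1}. \<bar>s - t\<bar> < d \<longrightarrow> \<bar>W s - W t\<bar> < e"
      using finite_unif[OF Ws_finite[of nk] Ws_cont[of _ nk] e] by blast
    obtain N0 where N0: "\<forall>N\<ge>N0. \<rho>^N < d" using rho_small[OF d(1)] by blast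
    show "\<exists>N0. \<forall>N\<ge>N0. \<forall>k<2^N. \<forall>s\<in>{l (Suc N) k<..<r (Suc N) k}. \<forall>t\<in>{l (Suc N) k<..<r (Suc N) k}.
        \<bar>ww nk s - ww nk t\<bar> \<le> e \<and> \<bar>ww nk s\<bar> \<le> B"
    proof (intro exI[of _ "max N0 (fst nk)"] allI impI ballI)
      fix N k s t assume N: "max N0 (fst nk) \<le> N" and k: "k < 2^N"
        and s: "s \<in> {l (Suc N) k<..<r (Suc N) k}" and t: "t \<in> {l (Suc N) k<..<r (Suc N) k}"
      obtain W where W: "W \<in> Ws nk" "\<forall>s\<in>{l (Suc N) k<..<r (Suc N) k}. ww nk s = W s"
        using ww_eq[OF nk _ k] N by auto
      have st: "s \<in> {0..1}" "t \<in> {0..1}" using s t lr_bounds[OF k] by auto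
      have "\<bar>s - t\<bar> < d"
      proof -
        have "\<bar>s - t\<bar> < r (Suc N) k - l (Suc N) k" using s t by auto
        also have "\<dots> \<le> \<rho>^N" by (rule lr_width[OF k])
        also have "\<dots> < d" using N0 N by auto
        finally show ?thesis .
      qed
      then have "\<bar>W s - W t\<bar> < e" using d(2) W(1) st by blast
      then show "\<bar>ww nk s - ww nk t\<bar> \<le> e \<and> \<bar>ww nk s\<bar> \<le> B" using W(2) s t B W(1) st by auto
    qed
  qed
qed

end

context npart
begin

lemma tile_integrable:
  fixes F :: "real \<Rightarrow> real"
  assumes "\<And>k. k < 2^N \<Longrightarrow> \<exists>G. continuous_on {l (Suc N) k..r (Suc N) k} G \<and> (\<forall>s\<in>{l (Suc N) k<..<r (Suc N) k}. F s = G s)"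
  shows "F integrable_on {0..1}"
proof (rule tile_pred[where P="\<lambda>a b. F integrable_on {a..b}"])
  fix N k assume k: "k < (2::nat)^N" "F integrable_on {l (Suc N) k..m (Suc N) k}" "F integrable_on {m (Suc N) k..r (Suc N) k}"
  then show "F integrable_on {l (Suc N) k..r (Suc N) k}"
    using m_bounds[OF k(1)] by (intro Henstock_Kurzweil_Integration.integrable_combine[OF _ _ k(2,3)]) auto
next
  fix k assume k: "k < (2::nat)^N"
  obtain G where G: "continuous_on {l (Suc N) k..r (Suc N) k} G" "\<forall>s\<in>{l (Suc N) k<..<r (Suc N) k}. F s = G s"
    using assms[OF k] by blast
  show "F integrable_on {l (Suc N) k..r (Suc N) k}"
  proof (rule integrable_spike_finite[of "{l (Suc N) k, r (Suc N) k}"])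
    show "G integrable_on {l (Suc N) k..r (Suc N) k}" by (rule integrable_continuous_real[OF G(1)])
    fix x assume "x \<in> {l (Suc N) k..r (Suc N) k} - {l (Suc N) k, r (Suc N) k}"
    then show "F x = G x" using G(2) by auto
  qed simp
qed

end

context setting
begin

lemma psi0: "nk \<in> idx \<Longrightarrow> psi sG \<alpha> l m r nk 0 = 0"
proof -
  assume nk: "nk \<in> idx"
  show ?thesis
  proof (cases "fst nk = 0")
    case True
    then have "nk = (0,0)" using nk unfolding idx_def by auto
    then show ?thesis unfolding psi_def by (simp add: hh_same)
  next
    case False
    then obtain N k where e: "nk = (Suc N, k)" and k: "k < 2^N" using nk unfolding idx_def
      by (cases nk) (auto simp: gr0_conv_Suc)
    show ?thesis using m_bounds[OF k] unfolding psi_def e by (auto simp: hh_same)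
  qed
qed

lemma fB_cont: "continuous_on {0..1} (\<lambda>t. (ff sG \<beta> t)^2)" by (rule ff2_cont[OF cont_b])

lemma integ1:
  assumes nk: "nk \<in> idx"
  shows "(\<lambda>t. (ff sG \<beta> t)^2 * ww nk t) integrable_on {0..1}"
proof (rule tile_integrable[where N="fst nk"])
  fix k assume k: "k < (2::nat)^(fst nk)"
  obtain W where W: "W \<in> Ws nk" "\<forall>s\<in>{l (Suc (fst nk)) k<..<r (Suc (fst nk)) k}. ww nk s = W s"
    using ww_eq[OF nk order_refl k] by blast
  have sub: "{l (Suc (fst nk)) k..r (Suc (fst nk)) k} \<subseteq> {0..1}" using lr_bounds[OF k] by auto
  show "\<exists>G. continuous_on {l (Suc (fst nk)) k..r (Suc (fst nk)) k} G \<and> (\<forall>s\<in>{l (Suc (fst nk)) k<..<r (Suc (fst nk)) k}. (ff sG \<beta> s)^2 * ww nk s = G s)"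
  proof (intro exI[of _ "\<lambda>t. (ff sG \<beta> t)^2 * W t"] conjI)
    show "continuous_on {l (Suc (fst nk)) k..r (Suc (fst nk)) k} (\<lambda>t. (ff sG \<beta> t)^2 * W t)"
      by (intro continuous_on_mult continuous_on_subset[OF fB_cont sub] continuous_on_subset[OF Ws_cont[OF W(1)] sub])
    show "\<forall>s\<in>{l (Suc (fst nk)) k<..<r (Suc (fst nk)) k}. (ff sG \<beta> s)^2 * ww nk s = (ff sG \<beta> s)^2 * W s"
      using W(2) by simp
  qed
qed

lemma integ2:
  assumes nk: "nk \<in> idx" and pq: "pq \<in> idx"
  shows "(\<lambda>t. (ff sG \<beta> t)^2 * ww nk t * ww pq t) integrable_on {0..1}"
proof (rule tile_integrable[where N="max (fst nk) (fst pq)"])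
  fix k assume k: "k < (2::nat)^(max (fst nk) (fst pq))"
  let ?N = "max (fst nk) (fst pq)"
  obtain W where W: "W \<in> Ws nk" "\<forall>s\<in>{l (Suc ?N) k<..<r (Suc ?N) k}. ww nk s = W s"
    using ww_eq[OF nk _ k] by auto
  obtain V where V: "V \<in> Ws pq" "\<forall>s\<in>{l (Suc ?N) k<..<r (Suc ?N) k}. ww pq s = V s"
    using ww_eq[OF pq _ k] by auto
  have sub: "{l (Suc ?N) k..r (Suc ?N) k} \<subseteq> {0..1}" using lr_bounds[OF k] by auto
  show "\<exists>G. continuous_on {l (Suc ?N) k..r (Suc ?N) k} G \<and> (\<forall>s\<in>{l (Suc ?N) k<..<r (Suc ?N) k}. (ff sG \<beta> s)^2 * ww nk s * ww pq s = G s)"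
  proof (intro exI[of _ "\<lambda>t. (ff sG \<beta> t)^2 * W t * V t"] conjI)
    show "continuous_on {l (Suc ?N) k..r (Suc ?N) k} (\<lambda>t. (ff sG \<beta> t)^2 * W t * V t)"
      by (intro continuous_on_mult continuous_on_subset[OF fB_cont sub] continuous_on_subset[OF Ws_cont[OF W(1)] sub]
          continuous_on_subset[OF Ws_cont[OF V(1)] sub])
    show "\<forall>s\<in>{l (Suc ?N) k<..<r (Suc ?N) k}. (ff sG \<beta> s)^2 * ww nk s * ww pq s = (ff sG \<beta> s)^2 * W s * V s"
      using W(2) V(2) by simp
  qed
qed

lemma Xv_int:
  assumes nk: "nk \<in> idx" and N: "fst nk \<le> N" and k: "k < 2^N"
  shows "Xv (psi sG \<alpha> l m r nk) (l (Suc N) k) (r (Suc N) k) = integral {l (Suc N) k..r (Suc N) k} (\<lambda>t. (ff sG \<beta> t)^2 * ww nk t)"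
proof -
  obtain W where W: "W \<in> Ws nk" "\<forall>s\<in>{l (Suc N) k<..<r (Suc N) k}. ww nk s = W s"
    "((\<lambda>s. (ff sG \<beta> s)^2 * W s) has_integral Xv (psi sG \<alpha> l m r nk) (l (Suc N) k) (r (Suc N) k)) {l (Suc N) k..r (Suc N) k}"
    using ww_eq[OF assms] by blast
  have "((\<lambda>t. (ff sG \<beta> t)^2 * ww nk t) has_integral Xv (psi sG \<alpha> l m r nk) (l (Suc N) k) (r (Suc N) k)) {l (Suc N) k..r (Suc N) k}"
  proof (rule has_integral_spike_finite[OF _ _ W(3), of "{l (Suc N) k, r (Suc N) k}"])
    fix x assume "x \<in> {l (Suc N) k..r (Suc N) k} - {l (Suc N) k, r (Suc N) k}"
    then show "(ff sG \<beta> x)^2 * ww nk x = (ff sG \<beta> x)^2 * W x" using W(2) by auto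
  qed simp
  then show ?thesis by (rule integral_unique[symmetric])
qed

lemma main_lim:
  assumes nk: "nk \<in> idx" and pq: "pq \<in> idx"
  shows "(\<lambda>N. \<Sum>ij\<in>FN N. Delta sG \<beta> l m r ij (psi sG \<alpha> l m r nk) * Delta sG \<beta> l m r ij (psi sG \<alpha> l m r pq))
     \<longlonglongrightarrow> integral {0..1} (\<lambda>t. uu nk t * uu pq t)"
proof -
  let ?q = "\<lambda>t. (ff sG \<beta> t)^2"
  have osc: "\<exists>B. \<forall>e>0. \<exists>N0. \<forall>N\<ge>N0. \<forall>k<2^N. \<forall>s\<in>{l (Suc N) k<..<r (Suc N) k}. \<forall>t\<in>{l (Suc N) k<..<r (Suc N) k}.
        \<bar>ww nk s - ww nk t\<bar> \<le> e \<and> \<bar>ww pq s - ww pq t\<bar> \<le> e \<and> \<bar>ww nk s\<bar> \<le> B \<and> \<bar>ww pq s\<bar> \<le> B"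
  proof -
    obtain B1 where B1: "\<forall>e>0. \<exists>N0. \<forall>N\<ge>N0. \<forall>k<2^N. \<forall>s\<in>{l (Suc N) k<..<r (Suc N) k}. \<forall>t\<in>{l (Suc N) k<..<r (Suc N) k}.
        \<bar>ww nk s - ww nk t\<bar> \<le> e \<and> \<bar>ww nk s\<bar> \<le> B1" using OSC[OF nk] by blast
    obtain B2 where B2: "\<forall>e>0. \<exists>N0. \<forall>N\<ge>N0. \<forall>k<2^N. \<forall>s\<in>{l (Suc N) k<..<r (Suc N) k}. \<forall>t\<in>{l (Suc N) k<..<r (Suc N) k}.
        \<bar>ww pq s - ww pq t\<bar> \<le> e \<and> \<bar>ww pq s\<bar> \<le> B2" using OSC[OF pq] by blast
    show ?thesis
    proof (intro exI[of _ "max B1 B2"] allI impI)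
      fix e :: real assume e: "e > 0"
      obtain N1 where N1: "\<forall>N\<ge>N1. \<forall>k<2^N. \<forall>s\<in>{l (Suc N) k<..<r (Suc N) k}. \<forall>t\<in>{l (Suc N) k<..<r (Suc N) k}.
        \<bar>ww nk s - ww nk t\<bar> \<le> e \<and> \<bar>ww nk s\<bar> \<le> B1" using B1 e by blast
      obtain N2 where N2: "\<forall>N\<ge>N2. \<forall>k<2^N. \<forall>s\<in>{l (Suc N) k<..<r (Suc N) k}. \<forall>t\<in>{l (Suc N) k<..<r (Suc N) k}.
        \<bar>ww pq s - ww pq t\<bar> \<le> e \<and> \<bar>ww pq s\<bar> \<le> B2" using B2 e by blast
      show "\<exists>N0. \<forall>N\<ge>N0. \<forall>k<2^N. \<forall>s\<in>{l (Suc N) k<..<r (Suc N) k}. \<forall>t\<in>{l (Suc N) k<..<r (Suc N) k}.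
        \<bar>ww nk s - ww nk t\<bar> \<le> e \<and> \<bar>ww pq s - ww pq t\<bar> \<le> e \<and> \<bar>ww nk s\<bar> \<le> max B1 B2 \<and> \<bar>ww pq s\<bar> \<le> max B1 B2"
      proof (intro exI[of _ "max N1 N2"] allI impI ballI)
        fix N k s t assume h: "max N1 N2 \<le> N" "k < (2::nat)^N" "s \<in> {l (Suc N) k<..<r (Suc N) k}" "t \<in> {l (Suc N) k<..<r (Suc N) k}"
        have n12: "N1 \<le> N" "N2 \<le> N" using h(1) by auto
        have a: "\<bar>ww nk s - ww nk t\<bar> \<le> e \<and> \<bar>ww nk s\<bar> \<le> B1" using N1[rule_format, OF n12(1) h(2) h(3) h(4)] .
        have b: "\<bar>ww pq s - ww pq t\<bar> \<le> e \<and> \<bar>ww pq s\<bar> \<le> B2" using N2[rule_format, OF n12(2) h(2) h(3) h(4)] .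
        show "\<bar>ww nk s - ww nk t\<bar> \<le> e \<and> \<bar>ww pq s - ww pq t\<bar> \<le> e \<and> \<bar>ww nk s\<bar> \<le> max B1 B2 \<and> \<bar>ww pq s\<bar> \<le> max B1 B2"
          using a b by linarith
      qed
    qed
  qed
  have lim: "(\<lambda>N. \<Sum>k<2^N. integral {l (Suc N) k..r (Suc N) k} (\<lambda>t. ?q t * ww nk t) *
      integral {l (Suc N) k..r (Suc N) k} (\<lambda>t. ?q t * ww pq t) / integral {l (Suc N) k..r (Suc N) k} ?q)
     \<longlonglongrightarrow> integral {0..1} (\<lambda>t. ?q t * ww nk t * ww pq t)"
  proof (rule conv[OF fB_cont _ integ1[OF nk] integ1[OF pq] integ2[OF nk pq] osc])
    fix t :: real assume "t \<in> {0..1}"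
    then have "ff sG \<beta> t > 0" by (rule ff_pos)
    then show "(ff sG \<beta> t)^2 > 0" by simp
  qed
  have ieq: "integral {0..1} (\<lambda>t. ?q t * ww nk t * ww pq t) = integral {0..1} (\<lambda>t. uu nk t * uu pq t)"
  proof (rule integral_cong)
    fix t :: real assume "t \<in> {0..1}"
    then have "ff sG \<beta> t > 0" by (rule ff_pos)
    then show "?q t * ww nk t * ww pq t = uu nk t * uu pq t" unfolding ww_def by (simp add: power2_eq_square)
  qed
  have ev: "\<forall>\<^sub>F N in sequentially. (\<Sum>k<2^N. integral {l (Suc N) k..r (Suc N) k} (\<lambda>t. ?q t * ww nk t) *
      integral {l (Suc N) k..r (Suc N) k} (\<lambda>t. ?q t * ww pq t) / integral {l (Suc N) k..r (Suc N) k} ?q)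
    = (\<Sum>ij\<in>FN N. Delta sG \<beta> l m r ij (psi sG \<alpha> l m r nk) * Delta sG \<beta> l m r ij (psi sG \<alpha> l m r pq))"
    unfolding eventually_sequentially
  proof (intro exI[of _ "max (fst nk) (fst pq)"] allI impI)
    fix N assume N: "max (fst nk) (fst pq) \<le> N"
    show "(\<Sum>k<2^N. integral {l (Suc N) k..r (Suc N) k} (\<lambda>t. ?q t * ww nk t) *
      integral {l (Suc N) k..r (Suc N) k} (\<lambda>t. ?q t * ww pq t) / integral {l (Suc N) k..r (Suc N) k} ?q)
      = (\<Sum>ij\<in>FN N. Delta sG \<beta> l m r ij (psi sG \<alpha> l m r nk) * Delta sG \<beta> l m r ij (psi sG \<alpha> l m r pq))"
      unfolding sumA[of "psi sG \<alpha> l m r nk" "psi sG \<alpha> l m r pq", OF psi0[OF nk] psi0[OF pq]]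
    proof (rule sum.cong[OF refl])
      fix k assume "k \<in> {..<(2::nat)^N}"
      then have k: "k < 2^N" by simp
      show "integral {l (Suc N) k..r (Suc N) k} (\<lambda>t. ?q t * ww nk t) *
        integral {l (Suc N) k..r (Suc N) k} (\<lambda>t. ?q t * ww pq t) / integral {l (Suc N) k..r (Suc N) k} ?q =
        Xv (psi sG \<alpha> l m r nk) (l (Suc N) k) (r (Suc N) k) * Xv (psi sG \<alpha> l m r pq) (l (Suc N) k) (r (Suc N) k) /
        hh sG \<beta> (l (Suc N) k) (r (Suc N) k)"
        using Xv_int[OF nk _ k] Xv_int[OF pq _ k] N hh_integral[OF cont_b, of "l (Suc N) k" "r (Suc N) k"] lr_bounds[OF k]
        by simp
    qed
  qed
  show ?thesis using Lim_transform_eventually[OF lim ev] ieq by simp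
qed

end

lemma holder_cont:
  assumes "holder01 f"
  shows "continuous_on {0..1} f"
proof -
  obtain C a where Ca: "0 < a" "a \<le> 1" "\<forall>x\<in>{0..1}. \<forall>y\<in>{0..1}. \<bar>f x - f y\<bar> \<le> C * \<bar>x - y\<bar> powr a"
    using assms unfolding holder01_def by blast
  show ?thesis unfolding continuous_on_iff
  proof (intro ballI allI impI)
    fix x e :: real assume x: "x \<in> {0..1}" and e: "0 < e"
    define d where "d = (e / (\<bar>C\<bar> + 1)) powr (1/a)"
    have d: "d > 0" unfolding d_def using e by simp
    show "\<exists>d>0. \<forall>x'\<in>{0..1}. dist x' x < d \<longrightarrow> dist (f x') (f x) < e"
    proof (intro exI[of _ d] conjI ballI impI d)
      fix y assume y: "y \<in> {0..1}" and dy: "dist y x < d"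
      have "\<bar>y - x\<bar> powr a < d powr a"
        using dy Ca(1) by (intro powr_less_mono2) (auto simp: dist_real_def)
      also have "d powr a = e / (\<bar>C\<bar> + 1)" unfolding d_def using e Ca(1)
        by (simp add: powr_powr)
      finally have lt: "\<bar>y - x\<bar> powr a < e / (\<bar>C\<bar> + 1)" .
      have "\<bar>f y - f x\<bar> \<le> C * \<bar>y - x\<bar> powr a" using Ca(3) x y by blast
      also have "\<dots> \<le> \<bar>C\<bar> * \<bar>y - x\<bar> powr a" by (intro mult_right_mono) auto
      also have "\<dots> \<le> (\<bar>C\<bar> + 1) * \<bar>y - x\<bar> powr a" by (intro mult_right_mono) auto
      also have "\<dots> < (\<bar>C\<bar> + 1) * (e / (\<bar>C\<bar> + 1))" using lt by (intro mult_strict_left_mono) auto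
      also have "\<dots> = e" by simp
      finally show "dist (f y) (f x) < e" by (simp add: dist_real_def)
    qed
  qed
qed

lemma has_sum_from_levels:
  fixes a b :: "nat \<times> nat \<Rightarrow> real"
  assumes la: "(\<lambda>N. \<Sum>ij\<in>FN N. a ij * a ij) \<longlonglongrightarrow> Ta"
    and lb: "(\<lambda>N. \<Sum>ij\<in>FN N. b ij * b ij) \<longlonglongrightarrow> Tb"
    and lab: "(\<lambda>N. \<Sum>ij\<in>FN N. a ij * b ij) \<longlonglongrightarrow> T"
  shows "((\<lambda>ij. a ij * b ij) has_sum T) idx"
proof -
  have sq: "(\<lambda>ij. c ij * c ij) summable_on idx" if lc: "(\<lambda>N. \<Sum>ij\<in>FN N. c ij * c ij) \<longlonglongrightarrow> Tc" for c :: "nat \<times> nat \<Rightarrow> real" and Tc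
  proof (rule nonneg_bdd_above_summable_on)
    show "\<And>x. x \<in> idx \<Longrightarrow> 0 \<le> c x * c x" by simp
    obtain K where K: "\<And>N. norm (\<Sum>ij\<in>FN N. c ij * c ij) \<le> K"
      using convergent_imp_Bseq[OF convergentI[OF lc]] unfolding Bseq_def by blast
    show "bdd_above (sum (\<lambda>ij. c ij * c ij) ` {F. F \<subseteq> idx \<and> finite F})"
    proof (rule bdd_aboveI[of _ K])
      fix x assume "x \<in> sum (\<lambda>ij. c ij * c ij) ` {F. F \<subseteq> idx \<and> finite F}"
      then obtain F where F: "F \<subseteq> idx" "finite F" "x = sum (\<lambda>ij. c ij * c ij) F" by blast
      obtain N where N: "F \<subseteq> FN N" using FN_cover[OF F(2,1)] by blast
      have "x \<le> (\<Sum>ij\<in>FN N. c ij * c ij)" unfolding F(3) by (rule sum_mono2[OF FN_finite N]) simp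
      also have "\<dots> \<le> K" using K[of N] by simp
      finally show "x \<le> K" .
    qed
  qed
  have g: "(\<lambda>ij. (a ij * a ij + b ij * b ij) * (1/2)) summable_on idx"
    using summable_on_add[OF sq[OF la] sq[OF lb]] by (rule summable_on_cmult_left)
  have "(\<lambda>ij. a ij * b ij) summable_on idx"
  proof (rule Infinite_Sum.abs_summable_summable, rule Infinite_Sum.abs_summable_on_comparison_test'[OF g])
    fix ij
    have "0 \<le> (\<bar>a ij\<bar> - \<bar>b ij\<bar>)^2" by simp
    then show "norm (a ij * b ij) \<le> (a ij * a ij + b ij * b ij) * (1/2)"
      by (simp add: power2_eq_square abs_mult algebra_simps)
  qed
  then obtain s where s: "((\<lambda>ij. a ij * b ij) has_sum s) idx" unfolding summable_on_def by blast
  have fl: "filterlim FN (finite_subsets_at_top idx) sequentially"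
    unfolding filterlim_finite_subsets_at_top
  proof (intro allI impI)
    fix X assume X: "finite X \<and> X \<subseteq> idx"
    then obtain N0 where "X \<subseteq> FN N0" using FN_cover by blast
    then show "\<forall>\<^sub>F N in sequentially. finite (FN N) \<and> X \<subseteq> FN N \<and> FN N \<subseteq> idx"
      unfolding eventually_sequentially using FN_mono FN_finite FN_sub by blast
  qed
  have "(\<lambda>N. \<Sum>ij\<in>FN N. a ij * b ij) \<longlonglongrightarrow> s"
    using filterlim_compose[OF s[unfolded has_sum_def] fl] .
  then have "s = T" using lab by (rule LIMSEQ_unique)
  then show ?thesis using s by simp
qed

theorem lemma7:
  fixes \<alpha> \<beta> sG :: "real \<Rightarrow> real" and \<rho> :: real and l m r :: "nat \<Rightarrow> nat \<Rightarrow> real"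
    and nk pq :: "nat \<times> nat"
  assumes "holder01 \<alpha>" and "holder01 \<beta>" and "holder01 sG"
    and "\<forall>t\<in>{0..1}. sG t > 0"
    and "nested_partition \<rho> l m r"
    and "nk \<in> idx" and "pq \<in> idx"
  shows "((\<lambda>ij. Gm sG \<alpha> \<beta> l m r ij nk * Gm sG \<alpha> \<beta> l m r ij pq) has_sum
     integral {0..1} (\<lambda>t.
        (phi sG \<alpha> l m r nk t + (\<alpha> t - \<beta> t) / sG t * psi sG \<alpha> l m r nk t) *
        (phi sG \<alpha> l m r pq t + (\<alpha> t - \<beta> t) / sG t * psi sG \<alpha> l m r pq t))) idx"
proof -
  interpret S: setting \<rho> l m r sG \<alpha> \<beta>
    using assms holder_cont by unfold_locales auto
  show ?thesis
    unfolding Gm_def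
    using has_sum_from_levels[OF S.main_lim[OF assms(6) assms(6)] S.main_lim[OF assms(7) assms(7)] S.main_lim[OF assms(6) assms(7)]]
    unfolding S.uu_def .
qed

end
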